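(* There is an absolute constant $C$ such that the following holds. Let $k\in\mathbb Z\setminus\{0\}$, $A<A'$ real, $\rho\in\mathbb R$, and let $g_k(\cdot,\rho)\in H^1(\mathbb R)$ be the solution of $(k^2-\partial_v^2)g_k(v,\rho)+8\,\mathbf 1_{[A,A']}(v)g_k(v,\rho)=\delta(v-\rho)$ on $\mathbb R$. Let $\mu_k=\sqrt{k^2+8}$ and, for $v\in\mathbb R$, $d=|[\min(v,\rho),\max(v,\rho)]\cap[A,A']|$. Then for all $v,\rho\in\mathbb R$, $$|g_k(v,\rho)|\le \frac{C}{|k|}e^{-|k||v-\rho|}e^{-(\mu_k-|k|)d}.$$
   Context: $|I|$ denotes the Lebesgue measure of a set $I$ and $\delta$ the Dirac mass. *)

theory Defs
  imports "HOL-Analysis.Analysis"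
begin

text \<open>Test functions: C^1 functions with compact support (this class of test
functions yields the same weak derivatives / weak formulations as C_c^infinity).\<close>
definition test_fun :: "(real \<Rightarrow> real) \<Rightarrow> bool" where
  "test_fun \<phi> \<longleftrightarrow> (\<forall>x. \<phi> differentiable (at x)) \<and> continuous_on UNIV (deriv \<phi>)
     \<and> (\<exists>R. \<forall>x. \<bar>x\<bar> > R \<longrightarrow> \<phi> x = 0)"

definition L2 :: "(real \<Rightarrow> real) \<Rightarrow> bool" where
  "L2 f \<longleftrightarrow> f \<in> borel_measurable lborel \<and> integrable lborel (\<lambda>x. (f x)^2)"

definition weak_deriv :: "(real \<Rightarrow> real) \<Rightarrow> (real \<Rightarrow> real) \<Rightarrow> bool" where
  "weak_deriv g h \<longleftrightarrow> (\<forall>\<phi>. test_fun \<phi> \<longrightarrow>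
     (\<integral>x. g x * deriv \<phi> x \<partial>lborel) = - (\<integral>x. h x * \<phi> x \<partial>lborel))"

definition H1 :: "(real \<Rightarrow> real) \<Rightarrow> bool" where
  "H1 g \<longleftrightarrow> L2 g \<and> (\<exists>h. L2 h \<and> weak_deriv g h)"

definition green_sol :: "int \<Rightarrow> real \<Rightarrow> real \<Rightarrow> real \<Rightarrow> (real \<Rightarrow> real) \<Rightarrow> bool" where
  "green_sol k A A' \<rho> g \<longleftrightarrow> H1 g \<and> (\<exists>h. L2 h \<and> weak_deriv g h \<and>
     (\<forall>\<phi>. test_fun \<phi> \<longrightarrow>
        (\<integral>x. (real_of_int k)^2 * g x * \<phi> x + h x * deriv \<phi> x
              + 8 * indicator {A..A'} x * g x * \<phi> x \<partial>lborel) = \<phi> \<rho>))"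

end

theory Submission
  imports Defs "HOL-Real_Asymp.Real_Asymp"
begin

lemma piecewise_deriv:
  fixes f f1 f2 :: "real \<Rightarrow> real"
  assumes d1: "(f1 has_real_derivative D1) (at c)" and d2: "(f2 has_real_derivative D2) (at c)"
    and e1: "eventually (\<lambda>x. f x = f1 x) (at_left c)" and e2: "eventually (\<lambda>x. f x = f2 x) (at_right c)"
    and c1: "f c = f1 c" and c2: "f c = f2 c" and DD1: "D1 = D" and DD2: "D2 = D"
  shows "(f has_real_derivative D) (at c)"
proof -
  have l1: "((\<lambda>y. (f1 y - f1 c) / (y - c)) \<longlongrightarrow> D) (at_left c)"
    using d1 unfolding has_field_derivative_iff DD1 by (rule filterlim_mono) (auto simp: at_le)
  have l2: "((\<lambda>y. (f2 y - f2 c) / (y - c)) \<longlongrightarrow> D) (at_right c)"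
    using d2 unfolding has_field_derivative_iff DD2 by (rule filterlim_mono) (auto simp: at_le)
  have "((\<lambda>y. (f y - f c) / (y - c)) \<longlongrightarrow> D) (at_left c)"
    by (rule Lim_transform_eventually[OF l1]) (use e1 c1 in \<open>auto elim: eventually_mono\<close>)
  moreover have "((\<lambda>y. (f y - f c) / (y - c)) \<longlongrightarrow> D) (at_right c)"
    by (rule Lim_transform_eventually[OF l2]) (use e2 c2 in \<open>auto elim: eventually_mono\<close>)
  ultimately show ?thesis unfolding has_field_derivative_iff by (rule filterlim_split_at)
qed


definition Ea :: "real \<Rightarrow> real \<Rightarrow> real \<Rightarrow> real" where
  "Ea K \<mu> L = cosh (\<mu>*L) + K/\<mu> * sinh (\<mu>*L)"
definition Eb :: "real \<Rightarrow> real \<Rightarrow> real \<Rightarrow> real" where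
  "Eb K \<mu> L = \<mu>/K * sinh (\<mu>*L) + cosh (\<mu>*L)"

definition EE :: "real \<Rightarrow> real \<Rightarrow> real \<Rightarrow> real \<Rightarrow> real \<Rightarrow> real" where
  "EE K \<mu> A A' y = (if A' \<le> y then exp (-K*(y-A')) else if A \<le> y then
      cosh (\<mu>*(A'-y)) + K/\<mu> * sinh (\<mu>*(A'-y))
    else Ea K \<mu> (A'-A) * cosh (K*(A-y)) + Eb K \<mu> (A'-A) * sinh (K*(A-y)))"

definition EE1 :: "real \<Rightarrow> real \<Rightarrow> real \<Rightarrow> real \<Rightarrow> real \<Rightarrow> real" where
  "EE1 K \<mu> A A' y = (if A' \<le> y then -K * exp (-K*(y-A')) else if A \<le> y then
      -\<mu> * sinh (\<mu>*(A'-y)) - K * cosh (\<mu>*(A'-y))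
    else -K * Ea K \<mu> (A'-A) * sinh (K*(A-y)) - K * Eb K \<mu> (A'-A) * cosh (K*(A-y)))"

lemma deriv_open:
  fixes f g :: "real \<Rightarrow> real"
  assumes "open S" "y \<in> S" "\<And>x. x \<in> S \<Longrightarrow> f x = g x" "(g has_real_derivative D) (at y)" "D = D'"
  shows "(f has_real_derivative D') (at y)"
proof -
  have "eventually (\<lambda>x. f x = g x) (nhds y)"
    using assms(1,2,3) eventually_nhds by blast
  thus ?thesis using DERIV_cong_ev[of y y f g D D] assms(4,5) by simp
qed

lemma piecewise_cont:
  fixes f fa fb :: "real \<Rightarrow> real"
  assumes "isCont fa c" "isCont fb c"
    and e1: "eventually (\<lambda>x. f x = fa x) (at_left c)" and e2: "eventually (\<lambda>x. f x = fb x) (at_right c)"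
    and c1: "f c = fa c" and c2: "f c = fb c"
  shows "isCont f c"
proof -
  have "(fa \<longlongrightarrow> f c) (at_left c)" using assms(1) c1 unfolding isCont_def by (metis filterlim_mono at_le order_refl subset_UNIV)
  hence "(f \<longlongrightarrow> f c) (at_left c)" by (rule Lim_transform_eventually) (use e1 in \<open>auto elim: eventually_mono\<close>)
  moreover have "(fb \<longlongrightarrow> f c) (at_right c)" using assms(2) c2 unfolding isCont_def by (metis filterlim_mono at_le order_refl subset_UNIV)
  hence "(f \<longlongrightarrow> f c) (at_right c)" by (rule Lim_transform_eventually) (use e2 in \<open>auto elim: eventually_mono\<close>)
  ultimately show ?thesis unfolding isCont_def by (rule filterlim_split_at)
qed

lemma cont_open:
  fixes f g :: "real \<Rightarrow> real"
  assumes "open S" "y \<in> S" "\<And>x. x \<in> S \<Longrightarrow> f x = g x" "isCont g y"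
  shows "isCont f y"
proof -
  have "eventually (\<lambda>x. f x = g x) (nhds y)"
    using assms(1,2,3) eventually_nhds by blast
  thus ?thesis using isCont_cong assms(4) by blast
qed

locale Epar =
  fixes K \<mu> A A' :: real
  assumes K: "K > 0" and mu2: "\<mu>^2 = K^2 + 8" and mu: "\<mu> > 0" and AA: "A < A'"
begin

lemma Kmu: "K < \<mu>"
proof -
  have "K^2 < \<mu>^2" using mu2 by simp
  thus ?thesis using K mu by (smt (verit) power_mono)
qed

abbreviation "a0 \<equiv> Ea K \<mu> (A'-A)"
abbreviation "b0 \<equiv> Eb K \<mu> (A'-A)"

lemma sinh_nonneg: "x \<ge> 0 \<Longrightarrow> sinh (x::real) \<ge> 0" by simp
lemma cosh_pos': "cosh (x::real) > 0" by (simp)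

lemma a0_pos: "a0 > 0"
  unfolding Ea_def using K mu AA by (auto intro!: add_pos_nonneg simp: cosh_real_pos)

lemma b0_ge_a0: "b0 \<ge> a0"
proof -
  have "K/\<mu> \<le> \<mu>/K" using K mu Kmu by (simp add: field_simps power2_eq_square[symmetric])
  moreover have "sinh (\<mu>*(A'-A)) \<ge> 0" using mu AA by simp
  ultimately show ?thesis unfolding Ea_def Eb_def by (smt (verit) mult_right_mono)
qed

lemma EE_pos: "EE K \<mu> A A' y > 0"
  using a0_pos b0_ge_a0 K mu by (auto simp: EE_def cosh_real_pos intro!: add_pos_nonneg)


lemma dfr: "((\<lambda>y. exp (-K*(y-A'))) has_real_derivative -K * exp (-K*(y-A'))) (at y)"
  by (auto intro!: derivative_eq_intros)
lemma dfm: "((\<lambda>y. cosh (\<mu>*(A'-y)) + K/\<mu> * sinh (\<mu>*(A'-y))) has_real_derivative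
   -\<mu> * sinh (\<mu>*(A'-y)) - K * cosh (\<mu>*(A'-y))) (at y)"
  using mu by (auto intro!: derivative_eq_intros simp: field_simps)
lemma dfl: "((\<lambda>y. a0 * cosh (K*(A-y)) + b0 * sinh (K*(A-y))) has_real_derivative
   -K * a0 * sinh (K*(A-y)) - K * b0 * cosh (K*(A-y))) (at y)"
  by (auto intro!: derivative_eq_intros simp: field_simps)

lemma EE_deriv: "(EE K \<mu> A A' has_real_derivative EE1 K \<mu> A A' y) (at y)"
proof -
  consider "y > A'" | "y = A'" | "A < y \<and> y < A'" | "y = A" | "y < A" by linarith
  thus ?thesis
  proof cases
    case 1
    show ?thesis by (rule deriv_open[of "{A'<..}", OF _ _ _ dfr]) (use 1 in \<open>auto simp: EE_def EE1_def\<close>)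
  next
    case 2
    show ?thesis
    proof (rule piecewise_deriv[OF dfm dfr])
      show "\<forall>\<^sub>F x in at_left y. EE K \<mu> A A' x = cosh (\<mu> * (A' - x)) + K / \<mu> * sinh (\<mu> * (A' - x))"
        using eventually_at_left_real[of A y] 2 AA by (auto simp: EE_def elim!: eventually_mono)
      show "\<forall>\<^sub>F x in at_right y. EE K \<mu> A A' x = exp (- K * (x - A'))"
        using eventually_at_right_real[of y "y+1"] 2 by (auto simp: EE_def elim!: eventually_mono)
    qed (use 2 AA in \<open>auto simp: EE_def EE1_def\<close>)
  next
    case 3
    show ?thesis by (rule deriv_open[of "{A<..<A'}", OF _ _ _ dfm]) (use 3 in \<open>auto simp: EE_def EE1_def\<close>)
  next
    case 4
    show ?thesis
    proof (rule piecewise_deriv[OF dfl dfm])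
      show "\<forall>\<^sub>F x in at_left y. EE K \<mu> A A' x = a0 * cosh (K*(A-x)) + b0 * sinh (K*(A-x))"
        using eventually_at_left_real[of "y-1" y] 4 AA by (auto simp: EE_def elim!: eventually_mono)
      show "\<forall>\<^sub>F x in at_right y. EE K \<mu> A A' x = cosh (\<mu> * (A' - x)) + K / \<mu> * sinh (\<mu> * (A' - x))"
        using eventually_at_right_real[of y A'] 4 AA by (auto simp: EE_def elim!: eventually_mono)
    qed (use 4 AA K mu in \<open>auto simp: EE_def EE1_def Ea_def Eb_def field_simps\<close>)
  next
    case 5
    show ?thesis by (rule deriv_open[of "{..<A}", OF _ _ _ dfl]) (use 5 AA in \<open>auto simp: EE_def EE1_def\<close>)
  qed
qed


lemma EE1_cont: "isCont (EE1 K \<mu> A A') y"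
proof -
  consider "y > A'" | "y = A'" | "A < y \<and> y < A'" | "y = A" | "y < A" by linarith
  thus ?thesis
  proof cases
    case 1
    show ?thesis by (rule cont_open[of "{A'<..}", where g="\<lambda>y. -K * exp (-K*(y-A'))"]) (use 1 in \<open>auto simp: EE1_def intro!: continuous_intros\<close>)
  next
    case 2
    show ?thesis
    proof (rule piecewise_cont[where fa="\<lambda>y. -\<mu> * sinh (\<mu>*(A'-y)) - K * cosh (\<mu>*(A'-y))" and fb = "\<lambda>y. -K * exp (-K*(y-A'))"])
      show "\<forall>\<^sub>F x in at_left y. EE1 K \<mu> A A' x = -\<mu> * sinh (\<mu>*(A'-x)) - K * cosh (\<mu>*(A'-x))"
        using eventually_at_left_real[of A y] 2 AA by (auto simp: EE1_def elim!: eventually_mono)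
      show "\<forall>\<^sub>F x in at_right y. EE1 K \<mu> A A' x = -K * exp (-K*(x-A'))"
        using eventually_at_right_real[of y "y+1"] 2 by (auto simp: EE1_def elim!: eventually_mono)
    qed (use 2 AA in \<open>auto simp: EE1_def intro!: continuous_intros\<close>)
  next
    case 3
    show ?thesis by (rule cont_open[of "{A<..<A'}", where g="\<lambda>y. -\<mu> * sinh (\<mu>*(A'-y)) - K * cosh (\<mu>*(A'-y))"]) (use 3 in \<open>auto simp: EE1_def intro!: continuous_intros\<close>)
  next
    case 4
    show ?thesis
    proof (rule piecewise_cont[where fa="\<lambda>y. -K * a0 * sinh (K*(A-y)) - K * b0 * cosh (K*(A-y))" and fb="\<lambda>y. -\<mu> * sinh (\<mu>*(A'-y)) - K * cosh (\<mu>*(A'-y))"])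
      show "\<forall>\<^sub>F x in at_left y. EE1 K \<mu> A A' x = -K * a0 * sinh (K*(A-x)) - K * b0 * cosh (K*(A-x))"
        using eventually_at_left_real[of "y-1" y] 4 AA by (auto simp: EE1_def elim!: eventually_mono)
      show "\<forall>\<^sub>F x in at_right y. EE1 K \<mu> A A' x = -\<mu> * sinh (\<mu>*(A'-x)) - K * cosh (\<mu>*(A'-x))"
        using eventually_at_right_real[of y A'] 4 AA by (auto simp: EE1_def elim!: eventually_mono)
    qed (use 4 AA K mu in \<open>auto simp: EE1_def Ea_def Eb_def field_simps intro!: continuous_intros\<close>)
  next
    case 5
    show ?thesis by (rule cont_open[of "{..<A}", where g="\<lambda>y. -K * a0 * sinh (K*(A-y)) - K * b0 * cosh (K*(A-y))"]) (use 5 AA in \<open>auto simp: EE1_def intro!: continuous_intros\<close>)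
  qed
qed

lemma EE1_deriv: "y \<noteq> A \<Longrightarrow> y \<noteq> A' \<Longrightarrow>
   (EE1 K \<mu> A A' has_real_derivative (K^2 + 8 * indicator {A..A'} y) * EE K \<mu> A A' y) (at y)"
proof -
  assume y: "y \<noteq> A" "y \<noteq> A'"
  consider "y > A'" | "A < y \<and> y < A'" | "y < A" using y by linarith
  thus ?thesis
  proof cases
    case 1
    show ?thesis by (rule deriv_open[of "{A'<..}", where g="\<lambda>y. -K * exp (-K*(y-A'))"])
      (use 1 in \<open>auto simp: EE1_def EE_def intro!: derivative_eq_intros simp: power2_eq_square\<close>)
  next
    case 2
    show ?thesis by (rule deriv_open[of "{A<..<A'}", where g="\<lambda>y. -\<mu> * sinh (\<mu>*(A'-y)) - K * cosh (\<mu>*(A'-y))"])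
      (use 2 mu mu2[symmetric] in \<open>auto simp: EE1_def EE_def intro!: derivative_eq_intros simp: field_simps power2_eq_square\<close>)
  next
    case 3
    show ?thesis by (rule deriv_open[of "{..<A}", where g="\<lambda>y. -K * a0 * sinh (K*(A-y)) - K * b0 * cosh (K*(A-y))"])
      (use 3 AA in \<open>auto simp: EE1_def EE_def intro!: derivative_eq_intros simp: field_simps power2_eq_square\<close>)
  qed
qed

lemma EE1_le: "EE1 K \<mu> A A' y \<le> -K * EE K \<mu> A A' y"
proof -
  consider "y \<ge> A'" | "A \<le> y \<and> y < A'" | "y < A" by linarith
  thus ?thesis
  proof cases
    case 1 thus ?thesis by (simp add: EE_def EE1_def)
  next
    case 2
    have s: "sinh (\<mu>*(A'-y)) \<ge> 0" using 2 mu by simp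
    have "K * (K/\<mu>) \<le> \<mu>" using K mu Kmu by (simp add: field_simps power2_eq_square[symmetric])
    hence "K * (K/\<mu>) * sinh (\<mu>*(A'-y)) \<le> \<mu> * sinh (\<mu>*(A'-y))" using s by (rule mult_right_mono)
    thus ?thesis using 2 by (simp add: EE_def EE1_def algebra_simps)
  next
    case 3
    have "(b0 - a0) * (cosh (K*(A-y)) - sinh (K*(A-y))) \<ge> 0"
      using b0_ge_a0 sinh_le_cosh_real by simp
    hence "a0 * cosh (K*(A-y)) + b0 * sinh (K*(A-y)) \<le> a0 * sinh (K*(A-y)) + b0 * cosh (K*(A-y))"
      by (simp add: algebra_simps)
    hence "K * (a0 * cosh (K*(A-y)) + b0 * sinh (K*(A-y))) \<le> K * (a0 * sinh (K*(A-y)) + b0 * cosh (K*(A-y)))"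
      using K by (intro mult_left_mono) auto
    thus ?thesis using 3 AA by (simp add: EE_def EE1_def algebra_simps)
  qed
qed


lemma EE_mid: "A \<le> y \<Longrightarrow> y \<le> A' \<Longrightarrow> EE K \<mu> A A' y = cosh (\<mu>*(A'-y)) + K/\<mu> * sinh (\<mu>*(A'-y))"
  by (auto simp: EE_def)
lemma EE_left: "y \<le> A \<Longrightarrow> EE K \<mu> A A' y = a0 * cosh (K*(A-y)) + b0 * sinh (K*(A-y))"
  using AA by (auto simp: EE_def Ea_def)
lemma EE_right: "A' \<le> y \<Longrightarrow> EE K \<mu> A A' y = exp (-K*(y-A'))"
  by (auto simp: EE_def)

lemma R_right: "A' \<le> t \<Longrightarrow> t \<le> t' \<Longrightarrow> EE K \<mu> A A' t' = exp (-K*(t'-t)) * EE K \<mu> A A' t"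
  by (simp add: EE_right mult_exp_exp algebra_simps)

lemma R_mid: assumes "A \<le> t" "t \<le> t'" "t' \<le> A'"
  shows "EE K \<mu> A A' t' \<le> 2 * exp (-\<mu>*(t'-t)) * EE K \<mu> A A' t"
proof -
  have k1: "K/\<mu> \<le> 1" using K mu Kmu by simp
  have sp: "0 \<le> sinh (\<mu>*(A'-t'))" using assms mu by simp
  have "K/\<mu> * sinh (\<mu>*(A'-t')) \<le> sinh (\<mu>*(A'-t'))"
    using mult_left_le_one_le[OF sp _ k1] K mu by simp
  hence "EE K \<mu> A A' t' \<le> cosh (\<mu>*(A'-t')) + sinh (\<mu>*(A'-t'))"
    using assms by (simp add: EE_mid)
  also have "\<dots> = exp (\<mu>*(A'-t'))" by (simp add: cosh_plus_sinh)
  also have "\<dots> = exp (\<mu>*(A'-t)) * exp (-\<mu>*(t'-t))" by (simp add: mult_exp_exp algebra_simps)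
  also have "exp (\<mu>*(A'-t)) \<le> 2 * EE K \<mu> A A' t"
  proof -
    have "exp (\<mu>*(A'-t)) \<le> 2 * cosh (\<mu>*(A'-t))" by (simp add: cosh_field_def)
    moreover have "0 \<le> K/\<mu> * sinh (\<mu>*(A'-t))" using assms mu K by simp
    ultimately show ?thesis using assms by (simp add: EE_mid)
  qed
  hence "exp (\<mu>*(A'-t)) * exp (-\<mu>*(t'-t)) \<le> 2 * EE K \<mu> A A' t * exp (-\<mu>*(t'-t))" by simp
  finally show ?thesis by (simp add: algebra_simps)
qed

lemma R_left: assumes "t \<le> t'" "t' \<le> A"
  shows "EE K \<mu> A A' t' \<le> exp (-K*(t'-t)) * EE K \<mu> A A' t"
proof -
  define x where "x = K*(A-t)"
  define x' where "x' = K*(A-t')"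
  have xx: "x' \<le> x" using assms K by (simp add: x_def x'_def mult_left_mono)
  have e: "exp (-K*(t'-t)) = exp (x' - x)" by (simp add: x_def x'_def algebra_simps)
  have "(b0 - a0) * exp (x' - 2*x) \<le> (b0 - a0) * exp (-x')"
    using b0_ge_a0 xx by (intro mult_left_mono) auto
  moreover have "(a0-b0)/2 * exp (-x') = -((b0 - a0) * exp (-x'))/2" by (simp add: algebra_simps)
  moreover have "(a0-b0)/2 * exp (x' - 2*x) = -((b0 - a0) * exp (x' - 2*x))/2" by (simp add: algebra_simps)
  ultimately have "(a0+b0)/2 * exp x' + (a0-b0)/2 * exp (-x') \<le> (a0+b0)/2 * exp x' + (a0-b0)/2 * exp (x' - 2*x)"
    by linarith
  also have "\<dots> = (a0+b0)/2 * (exp (x' - x) * exp x) + (a0-b0)/2 * (exp (x' - x) * exp (-x))"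
    by (simp add: mult_exp_exp)
  also have "\<dots> = exp (x' - x) * ((a0+b0)/2 * exp x + (a0-b0)/2 * exp (-x))"
    by (simp add: algebra_simps)
  finally have "a0 * cosh x' + b0 * sinh x' \<le> exp (x' - x) * (a0 * cosh x + b0 * sinh x)"
    by (simp add: cosh_field_def sinh_field_def algebra_simps add_divide_distrib diff_divide_distrib)
  moreover have "EE K \<mu> A A' t' = a0 * cosh x' + b0 * sinh x'" using EE_left assms by (simp add: x'_def)
  moreover have "EE K \<mu> A A' t = a0 * cosh x + b0 * sinh x" using EE_left assms by (simp add: x_def)
  ultimately show ?thesis unfolding e by simp
qed

lemma EE_ratio: assumes "\<rho> \<le> v"
  shows "EE K \<mu> A A' v \<le> 2 * EE K \<mu> A A' \<rho> * exp (-K*(v-\<rho>)) * exp (-(\<mu>-K) * max 0 (min v A' - max \<rho> A))"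
proof -
  let ?E = "EE K \<mu> A A'"
  have Ep: "\<And>y. ?E y > 0" by (rule EE_pos)
  have key: "?E v \<le> 2 * ?E \<rho> * exp (-K*(v-\<rho>) - (\<mu>-K) * max 0 (min v A' - max \<rho> A))"
  proof -
    consider "v \<le> A" | "A' \<le> \<rho>" | "\<rho> \<le> A \<and> A \<le> v \<and> v \<le> A'" | "\<rho> \<le> A \<and> A' \<le> v"
      | "A \<le> \<rho> \<and> v \<le> A'" | "A \<le> \<rho> \<and> \<rho> \<le> A' \<and> A' \<le> v" using assms by linarith
    thus ?thesis
    proof cases
      case 1
      have "?E v \<le> exp (-K*(v-\<rho>)) * ?E \<rho>" using R_left assms 1 by blast
      moreover have "max 0 (min v A' - max \<rho> A) = 0" using 1 AA by linarith
      moreover have "0 < exp (-K*(v-\<rho>)) * ?E \<rho>" using Ep[of \<rho>] by simp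
      ultimately show ?thesis by (simp add: algebra_simps)
    next
      case 2
      have "?E v = exp (-K*(v-\<rho>)) * ?E \<rho>" using R_right assms 2 by blast
      moreover have "max 0 (min v A' - max \<rho> A) = 0" using 2 AA assms by linarith
      moreover have "0 < exp (-K*(v-\<rho>)) * ?E \<rho>" using Ep[of \<rho>] by simp
      ultimately show ?thesis by (simp add: algebra_simps)
    next
      case 3
      have "?E v \<le> 2 * exp (-\<mu>*(v-A)) * ?E A" using R_mid 3 by blast
      also have "\<dots> \<le> 2 * exp (-\<mu>*(v-A)) * (exp (-K*(A-\<rho>)) * ?E \<rho>)"
        using R_left[of \<rho> A] 3 by (intro mult_left_mono) auto
      also have "\<dots> = 2 * ?E \<rho> * exp (-\<mu>*(v-A) + -K*(A-\<rho>))" by (simp add: mult_exp_exp)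
      also have "-\<mu>*(v-A) + -K*(A-\<rho>) = -K*(v-\<rho>) - (\<mu>-K) * max 0 (min v A' - max \<rho> A)"
        using 3 by (simp add: algebra_simps max_def min_def)
      finally show ?thesis .
    next
      case 4
      have "?E v = exp (-K*(v-A')) * ?E A'" using R_right 4 by blast
      also have "\<dots> \<le> exp (-K*(v-A')) * (2 * exp (-\<mu>*(A'-A)) * ?E A)"
        using R_mid[of A A'] 4 AA by (intro mult_left_mono) auto
      also have "\<dots> \<le> exp (-K*(v-A')) * (2 * exp (-\<mu>*(A'-A)) * (exp (-K*(A-\<rho>)) * ?E \<rho>))"
        using R_left[of \<rho> A] 4 by (intro mult_left_mono) auto
      also have "\<dots> = 2 * ?E \<rho> * exp (-K*(v-A') + -\<mu>*(A'-A) + -K*(A-\<rho>))" by (simp add: mult_exp_exp algebra_simps)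
      also have "-K*(v-A') + -\<mu>*(A'-A) + -K*(A-\<rho>) = -K*(v-\<rho>) - (\<mu>-K) * max 0 (min v A' - max \<rho> A)"
        using 4 AA by (cases "v = A'") (simp_all add: algebra_simps max_def min_def)
      finally show ?thesis .
    next
      case 5
      have "?E v \<le> 2 * exp (-\<mu>*(v-\<rho>)) * ?E \<rho>" using R_mid 5 assms by blast
      also have "\<dots> = 2 * ?E \<rho> * exp (-\<mu>*(v-\<rho>))" by simp
      also have "-\<mu>*(v-\<rho>) = -K*(v-\<rho>) - (\<mu>-K) * max 0 (min v A' - max \<rho> A)"
        using 5 assms by (cases "\<rho> = A") (simp_all add: algebra_simps max_def min_def)
      finally show ?thesis .
    next
      case 6
      have dd: "max 0 (min v A' - max \<rho> A) = A' - \<rho>"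
        using 6 by (simp add: max_absorb1 min_absorb2 max_absorb2)
      have "?E v = exp (-K*(v-A')) * ?E A'" using R_right 6 by blast
      also have "\<dots> \<le> exp (-K*(v-A')) * (2 * exp (-\<mu>*(A'-\<rho>)) * ?E \<rho>)"
        using R_mid[of \<rho> A'] 6 by (intro mult_left_mono) auto
      also have "\<dots> = 2 * ?E \<rho> * exp (-K*(v-A') + -\<mu>*(A'-\<rho>))" by (simp add: mult_exp_exp algebra_simps)
      also have "-K*(v-A') + -\<mu>*(A'-\<rho>) = -K*(v-\<rho>) - (\<mu>-K) * max 0 (min v A' - max \<rho> A)"
        unfolding dd by (simp add: algebra_simps)
      finally show ?thesis .
    qed
  qed
  thus ?thesis by (simp add: mult_exp_exp algebra_simps)
qed

end

context Epar begin

lemma EE_cont: "isCont (EE K \<mu> A A') y"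
  using EE_deriv DERIV_isCont by blast

lemma RS:
  fixes g g1 :: "real \<Rightarrow> real" and \<rho> gR :: real
  assumes gc: "continuous_on {\<rho>..} g"
    and gd: "\<And>y. y > \<rho> \<Longrightarrow> (g has_real_derivative g1 y) (at y)"
    and g1c: "continuous_on {\<rho><..} g1"
    and g1d: "\<And>y. y > \<rho> \<Longrightarrow> y \<noteq> A \<Longrightarrow> y \<noteq> A' \<Longrightarrow>
        (g1 has_real_derivative (K^2 + 8 * indicator {A..A'} y) * g y) (at y)"
    and lim: "(g1 \<longlongrightarrow> gR) (at_right \<rho>)"
    and L2: "integrable lborel (\<lambda>x. (g x)^2)"
  shows "\<forall>y\<ge>\<rho>. g y = g \<rho> / EE K \<mu> A A' \<rho> * EE K \<mu> A A' y"
    and "gR = g \<rho> / EE K \<mu> A A' \<rho> * EE1 K \<mu> A A' \<rho>"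
proof -
  define E where "E = EE K \<mu> A A'"
  define E1 where "E1 = EE1 K \<mu> A A'"
  define q where "q y = K^2 + 8 * indicator {A..A'} y" for y :: real
  define m where "m = g \<rho> / E \<rho>"
  define w where "w y = g y - m * E y" for y
  define w1 where "w1 y = g1 y - m * E1 y" for y
  have Ep: "\<And>y. E y > 0" unfolding E_def by (rule EE_pos)
  have qnn: "\<And>y. q y \<ge> 0" unfolding q_def by (simp add: indicator_def)
  have Ed: "\<And>y. (E has_real_derivative E1 y) (at y)" unfolding E_def E1_def by (rule EE_deriv)
  have E1d: "\<And>y. y \<noteq> A \<Longrightarrow> y \<noteq> A' \<Longrightarrow> (E1 has_real_derivative q y * E y) (at y)"
    unfolding E_def E1_def q_def by (rule EE1_deriv)
  have Ec: "\<And>y. isCont E y" unfolding E_def by (rule EE_cont)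
  have E1c: "\<And>y. isCont E1 y" unfolding E1_def by (rule EE1_cont)
  have wd: "(w has_real_derivative w1 y) (at y)" if "y > \<rho>" for y
    unfolding w_def w1_def using DERIV_diff[OF gd[OF that] DERIV_cmult[OF Ed, of m]] by simp
  have w1d: "(w1 has_real_derivative q y * w y) (at y)" if "y > \<rho>" "y \<noteq> A" "y \<noteq> A'" for y
  proof -
    have "(w1 has_real_derivative q y * g y - m * (q y * E y)) (at y)"
      unfolding w1_def q_def using DERIV_diff[OF g1d[OF that] DERIV_cmult[OF E1d, of y m]] that by (simp add: q_def)
    thus ?thesis by (simp add: w_def algebra_simps)
  qed
  have wc: "continuous_on {\<rho>..} w"
  proof -
    have "continuous_on {\<rho>..} E" using Ec by (simp add: continuous_at_imp_continuous_on)
    thus ?thesis unfolding w_def using gc by (intro continuous_intros)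
  qed
  have w1c: "continuous_on {\<rho><..} w1"
  proof -
    have "continuous_on {\<rho><..} E1" using E1c by (simp add: continuous_at_imp_continuous_on)
    thus ?thesis unfolding w1_def using g1c by (intro continuous_intros)
  qed
  have w0: "w \<rho> = 0" unfolding w_def m_def using Ep[of \<rho>] by simp
  have Pmono: "w s * w1 s \<le> w t * w1 t" if st: "\<rho> < s" "s \<le> t" for s t
  proof -
    have int: "((\<lambda>y. w1 y * w1 y + w y * (q y * w y)) has_integral (w t * w1 t - w s * w1 s)) {s..t}"
    proof (rule fundamental_theorem_of_calculus_interior_strong[where S="{A,A'}"])
      show "continuous_on {s..t} (\<lambda>y. w y * w1 y)"
        using st by (intro continuous_intros continuous_on_subset[OF wc] continuous_on_subset[OF w1c]) auto
      fix y assume y: "y \<in> {s<..<t} - {A,A'}"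
      hence yy: "y > \<rho>" "y \<noteq> A" "y \<noteq> A'" using st by auto
      have "((\<lambda>y. w y * w1 y) has_real_derivative w1 y * w1 y + (q y * w y) * w y) (at y)"
        using DERIV_mult[OF wd[OF yy(1)] w1d[OF yy]] by simp
      hence "((\<lambda>y. w y * w1 y) has_real_derivative w1 y * w1 y + w y * (q y * w y)) (at y)"
        by (simp add: algebra_simps)
      thus "((\<lambda>y. w y * w1 y) has_vector_derivative w1 y * w1 y + w y * (q y * w y)) (at y)"
        by (simp add: has_real_derivative_iff_has_vector_derivative)
    qed (use st in auto)
    moreover have "0 \<le> w1 y * w1 y + w y * (q y * w y)" for y
    proof -
      have e1: "w y * (q y * w y) = q y * (w y * w y)" by (simp add: algebra_simps)
      have e2: "0 \<le> q y * (w y * w y)" using qnn[of y] by simp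
      have e3: "0 \<le> w1 y * w1 y" by simp
      show "0 \<le> w1 y * w1 y + w y * (q y * w y)" using e1 e2 e3 by linarith
    qed
    ultimately have "0 \<le> w t * w1 t - w s * w1 s" by (rule has_integral_nonneg)
    thus ?thesis by simp
  qed
  have Plim: "((\<lambda>y. w y * w1 y) \<longlongrightarrow> 0) (at_right \<rho>)"
  proof -
    have "(w \<longlongrightarrow> w \<rho>) (at \<rho> within {\<rho>..})" using wc by (simp add: continuous_on_def)
    moreover have le1: "at_right \<rho> \<le> at \<rho> within {\<rho>..}" by (rule at_le) auto
    ultimately have "(w \<longlongrightarrow> 0) (at_right \<rho>)" using w0 tendsto_mono by metis
    moreover have le2: "at_right \<rho> \<le> at \<rho>" by (rule at_le) auto
    have "(E1 \<longlongrightarrow> E1 \<rho>) (at_right \<rho>)"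
      using E1c[of \<rho>] le2 unfolding isCont_def using tendsto_mono by metis
    hence "(w1 \<longlongrightarrow> gR - m * E1 \<rho>) (at_right \<rho>)"
      unfolding w1_def using lim by (intro tendsto_intros)
    ultimately show ?thesis using tendsto_mult[of w 0 _ w1] by simp
  qed
  have Pnn: "0 \<le> w y * w1 y" if y: "y > \<rho>" for y
  proof (rule tendsto_upperbound[OF Plim])
    show "\<forall>\<^sub>F x in at_right \<rho>. w x * w1 x \<le> w y * w1 y"
      using eventually_at_right_real[OF y] by eventually_elim (auto intro!: Pmono)
  qed simp
  have W2mono: "(w s)^2 \<le> (w t)^2" if st: "\<rho> < s" "s \<le> t" for s t
  proof -
    have int: "((\<lambda>y. 2 * (w y * w1 y)) has_integral ((w t)^2 - (w s)^2)) {s..t}"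
    proof (rule fundamental_theorem_of_calculus_interior_strong[where S="{}"])
      show "continuous_on {s..t} (\<lambda>y. (w y)^2)"
        using st by (intro continuous_intros continuous_on_subset[OF wc]) auto
      fix y assume y: "y \<in> {s<..<t} - {}"
      hence yy: "y > \<rho>" using st by auto
      have "((\<lambda>y. (w y)^2) has_real_derivative 2 * (w y * w1 y)) (at y)"
        using DERIV_power[OF wd[OF yy], of 2] by (simp add: algebra_simps)
      thus "((\<lambda>y. (w y)^2) has_vector_derivative 2 * (w y * w1 y)) (at y)"
        by (simp add: has_real_derivative_iff_has_vector_derivative)
    qed (use st in auto)
    moreover have "\<And>y. y \<in> {s..t} \<Longrightarrow> 0 \<le> 2 * (w y * w1 y)" using Pnn st by auto
    ultimately have "0 \<le> (w t)^2 - (w s)^2" by (rule has_integral_nonneg)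
    thus ?thesis by simp
  qed
  have wz: "w y = 0" if y: "y > \<rho>" for y
  proof (rule ccontr)
    assume nz: "w y \<noteq> 0"
    define c where "c = \<bar>w y\<bar>"
    have c: "c > 0" using nz by (simp add: c_def)
    have Edec: "E x \<le> 2 * E \<rho> * exp (-K*(x-\<rho>))" if "x \<ge> \<rho>" for x
    proof -
      have "E x \<le> 2 * E \<rho> * exp (-K*(x-\<rho>)) * exp (-(\<mu>-K) * max 0 (min x A' - max \<rho> A))"
        unfolding E_def by (rule EE_ratio[OF that])
      also have "\<dots> \<le> 2 * E \<rho> * exp (-K*(x-\<rho>)) * 1"
        using Ep[of \<rho>] Kmu by (intro mult_left_mono) (auto intro!: mult_nonpos_nonneg)
      finally show ?thesis by simp
    qed
    have ex0: "((\<lambda>x. exp (-K*(x-\<rho>))) \<longlongrightarrow> 0) at_top" using K by real_asymp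
    have "((\<lambda>x. \<bar>m\<bar> * (2 * E \<rho> * exp (-K*(x-\<rho>)))) \<longlongrightarrow> \<bar>m\<bar> * (2 * E \<rho> * 0)) at_top"
      by (intro tendsto_mult_left ex0)
    hence "eventually (\<lambda>x. \<bar>m\<bar> * (2 * E \<rho> * exp (-K*(x-\<rho>))) < c/2) at_top"
      using c by (intro order_tendstoD) auto
    then obtain Y0 where Y0: "\<And>x. x \<ge> Y0 \<Longrightarrow> \<bar>m\<bar> * (2 * E \<rho> * exp (-K*(x-\<rho>))) < c/2"
      by (auto simp: eventually_at_top_linorder)
    define Y where "Y = max Y0 y"
    have gbig: "(c/2)^2 \<le> (g x)^2" if x: "x \<ge> Y" for x
    proof -
      have "\<bar>m\<bar> * E x \<le> \<bar>m\<bar> * (2 * E \<rho> * exp (-K*(x-\<rho>)))"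
        using Edec[of x] x y by (intro mult_left_mono) (auto simp: Y_def)
      also have "\<dots> < c/2" using Y0 x by (auto simp: Y_def)
      finally have a: "\<bar>m * E x\<bar> < c/2" using Ep[of x] by (simp add: abs_mult)
      have "(w y)^2 \<le> (w x)^2" using W2mono y x by (auto simp: Y_def)
      hence b: "c \<le> \<bar>w x\<bar>" unfolding c_def by (simp add: abs_le_square_iff)
      have "g x = w x + m * E x" by (simp add: w_def)
      hence "c/2 \<le> \<bar>g x\<bar>" using a b by linarith
      thus ?thesis using c by (simp add: abs_le_square_iff[symmetric] abs_of_pos)
    qed
    define I where "I = (\<integral>x. (g x)^2 \<partial>lborel)"
    obtain n :: nat where n: "real n > I / (c/2)^2" using reals_Archimedean2 by blast
    have ii: "integrable lborel (indicator {Y..Y + real n} :: real \<Rightarrow> real)"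
      by (rule integrable_real_indicator) auto
    have "(\<integral>x. indicator {Y..Y + real n} x * (c/2)^2 \<partial>lborel) \<le> (\<integral>x. (g x)^2 \<partial>lborel)"
    proof (rule integral_mono[OF _ L2])
      show "integrable lborel (\<lambda>x. indicator {Y..Y + real n} x * (c/2)^2)"
        using ii by (rule integrable_mult_left)
      fix x show "indicator {Y..Y + real n} x * (c/2)^2 \<le> (g x)^2"
        using gbig[of x] by (auto simp: indicator_def)
    qed
    moreover have "(\<integral>x. indicator {Y..Y + real n} x * (c/2)^2 \<partial>lborel) = real n * (c/2)^2"
      using Bochner_Integration.integral_mult_left[where c="(c/2)^2" and M=lborel and f="indicator {Y..Y + real n} :: real \<Rightarrow> real"] ii
      by simp
    ultimately have "real n * (c/2)^2 \<le> I" by (simp add: I_def)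
    moreover have "I < real n * (c/2)^2" using n c by (simp add: field_simps)
    ultimately show False by simp
  qed
  have geq: "g y = m * E y" if "y \<ge> \<rho>" for y
  proof (cases "y = \<rho>")
    case True thus ?thesis using w0 by (simp add: w_def)
  next
    case False hence "y > \<rho>" using that by simp
    thus ?thesis using wz[of y] by (simp add: w_def)
  qed
  show "\<forall>y\<ge>\<rho>. g y = g \<rho> / EE K \<mu> A A' \<rho> * EE K \<mu> A A' y"
  proof (intro allI impI)
    fix y :: real assume "\<rho> \<le> y"
    thus "g y = g \<rho> / EE K \<mu> A A' \<rho> * EE K \<mu> A A' y" using geq[of y] by (simp add: m_def E_def)
  qed
  have g1eq: "g1 y = m * E1 y" if y: "y > \<rho>" for y
  proof -
    have "(g has_real_derivative m * E1 y) (at y)"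
    proof (rule deriv_open[of "{\<rho><..}" y g "\<lambda>y. m * E y"])
      show "((\<lambda>y. m * E y) has_real_derivative m * E1 y) (at y)" by (rule DERIV_cmult[OF Ed])
      show "\<And>x. x \<in> {\<rho><..} \<Longrightarrow> g x = m * E x" using geq by simp
    qed (use y in simp_all)
    thus ?thesis using DERIV_unique[OF gd[OF y]] by blast
  qed
  have "(g1 \<longlongrightarrow> m * E1 \<rho>) (at_right \<rho>)"
  proof -
    have "((\<lambda>y. m * E1 y) \<longlongrightarrow> m * E1 \<rho>) (at_right \<rho>)"
    proof -
      have le2: "at_right \<rho> \<le> at \<rho>" by (rule at_le) auto
      have "(E1 \<longlongrightarrow> E1 \<rho>) (at_right \<rho>)"
        by (rule tendsto_mono[OF le2]) (use E1c[of \<rho>] in \<open>simp add: isCont_def\<close>)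
      thus ?thesis by (rule tendsto_mult_left)
    qed
    thus ?thesis
    proof (rule Lim_transform_eventually)
      show "\<forall>\<^sub>F x in at_right \<rho>. m * E1 x = g1 x"
        using eventually_at_right_real[of \<rho> "\<rho>+1"] by (rule eventually_mono) (auto simp: g1eq)
    qed
  qed
  hence "gR = m * E1 \<rho>" using tendsto_unique[OF _ lim] by simp
  thus "gR = g \<rho> / EE K \<mu> A A' \<rho> * EE1 K \<mu> A A' \<rho>" by (simp add: m_def E_def E1_def)
qed

end

definition pw4 :: "real \<Rightarrow> real \<Rightarrow> real \<Rightarrow> (real \<Rightarrow> real) \<Rightarrow> (real \<Rightarrow> real) \<Rightarrow> (real \<Rightarrow> real) \<Rightarrow> (real \<Rightarrow> real) \<Rightarrow> real \<Rightarrow> real" where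
  "pw4 a b c p1 p2 p3 p4 t = (if t \<le> a then p1 t else if t \<le> b then p2 t else if t \<le> c then p3 t else p4 t)"

lemma pw4_deriv:
  fixes p1 p2 p3 p4 d1 d2 d3 d4 :: "real \<Rightarrow> real"
  assumes ab: "a < b" "b < c"
    and D1: "\<And>t. (p1 has_real_derivative d1 t) (at t)"
    and D2: "\<And>t. (p2 has_real_derivative d2 t) (at t)"
    and D3: "\<And>t. (p3 has_real_derivative d3 t) (at t)"
    and D4: "\<And>t. (p4 has_real_derivative d4 t) (at t)"
    and j: "p1 a = p2 a" "d1 a = d2 a" "p2 b = p3 b" "d2 b = d3 b" "p3 c = p4 c" "d3 c = d4 c"
  shows "(pw4 a b c p1 p2 p3 p4 has_real_derivative pw4 a b c d1 d2 d3 d4 t) (at t)"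
proof -
  consider "t < a" | "t = a" | "a < t \<and> t < b" | "t = b" | "b < t \<and> t < c" | "t = c" | "t > c" by linarith
  thus ?thesis
  proof cases
    case 1 show ?thesis by (rule deriv_open[of "{..<a}", OF _ _ _ D1]) (use 1 in \<open>auto simp: pw4_def\<close>)
  next
    case 2 show ?thesis
    proof (rule piecewise_deriv[OF D1 D2])
      show "\<forall>\<^sub>F x in at_left t. pw4 a b c p1 p2 p3 p4 x = p1 x"
        using eventually_at_left_real[of "t-1" t] 2 by (auto simp: pw4_def elim!: eventually_mono)
      show "\<forall>\<^sub>F x in at_right t. pw4 a b c p1 p2 p3 p4 x = p2 x"
        using eventually_at_right_real[of t b] 2 ab by (auto simp: pw4_def elim!: eventually_mono)
    qed (use 2 j in \<open>auto simp: pw4_def\<close>)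
  next
    case 3 show ?thesis by (rule deriv_open[of "{a<..<b}", OF _ _ _ D2]) (use 3 in \<open>auto simp: pw4_def\<close>)
  next
    case 4 show ?thesis
    proof (rule piecewise_deriv[OF D2 D3])
      show "\<forall>\<^sub>F x in at_left t. pw4 a b c p1 p2 p3 p4 x = p2 x"
        using eventually_at_left_real[of a t] 4 ab by (auto simp: pw4_def elim!: eventually_mono)
      show "\<forall>\<^sub>F x in at_right t. pw4 a b c p1 p2 p3 p4 x = p3 x"
        using eventually_at_right_real[of t c] 4 ab by (auto simp: pw4_def elim!: eventually_mono)
    qed (use 4 j ab in \<open>auto simp: pw4_def\<close>)
  next
    case 5 show ?thesis by (rule deriv_open[of "{b<..<c}", OF _ _ _ D3]) (use 5 ab in \<open>auto simp: pw4_def\<close>)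
  next
    case 6 show ?thesis
    proof (rule piecewise_deriv[OF D3 D4])
      show "\<forall>\<^sub>F x in at_left t. pw4 a b c p1 p2 p3 p4 x = p3 x"
        using eventually_at_left_real[of b t] 6 ab by (auto simp: pw4_def elim!: eventually_mono)
      show "\<forall>\<^sub>F x in at_right t. pw4 a b c p1 p2 p3 p4 x = p4 x"
        using eventually_at_right_real[of t "t+1"] 6 ab by (auto simp: pw4_def elim!: eventually_mono)
    qed (use 6 j ab in \<open>auto simp: pw4_def\<close>)
  next
    case 7 show ?thesis by (rule deriv_open[of "{c<..}", OF _ _ _ D4]) (use 7 ab in \<open>auto simp: pw4_def\<close>)
  qed
qed

lemma pw4_cont:
  fixes p1 p2 p3 p4 :: "real \<Rightarrow> real"
  assumes ab: "a < b" "b < c"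
    and C: "\<And>t. isCont p1 t" "\<And>t. isCont p2 t" "\<And>t. isCont p3 t" "\<And>t. isCont p4 t"
    and j: "p1 a = p2 a" "p2 b = p3 b" "p3 c = p4 c"
  shows "isCont (pw4 a b c p1 p2 p3 p4) t"
proof -
  consider "t < a" | "t = a" | "a < t \<and> t < b" | "t = b" | "b < t \<and> t < c" | "t = c" | "t > c" by linarith
  thus ?thesis
  proof cases
    case 1 show ?thesis by (rule cont_open[of "{..<a}", OF _ _ _ C(1)]) (use 1 in \<open>auto simp: pw4_def\<close>)
  next
    case 2 show ?thesis
    proof (rule piecewise_cont[OF C(1) C(2)])
      show "\<forall>\<^sub>F x in at_left t. pw4 a b c p1 p2 p3 p4 x = p1 x"
        using eventually_at_left_real[of "t-1" t] 2 by (auto simp: pw4_def elim!: eventually_mono)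
      show "\<forall>\<^sub>F x in at_right t. pw4 a b c p1 p2 p3 p4 x = p2 x"
        using eventually_at_right_real[of t b] 2 ab by (auto simp: pw4_def elim!: eventually_mono)
    qed (use 2 j in \<open>auto simp: pw4_def\<close>)
  next
    case 3 show ?thesis by (rule cont_open[of "{a<..<b}", OF _ _ _ C(2)]) (use 3 in \<open>auto simp: pw4_def\<close>)
  next
    case 4 show ?thesis
    proof (rule piecewise_cont[OF C(2) C(3)])
      show "\<forall>\<^sub>F x in at_left t. pw4 a b c p1 p2 p3 p4 x = p2 x"
        using eventually_at_left_real[of a t] 4 ab by (auto simp: pw4_def elim!: eventually_mono)
      show "\<forall>\<^sub>F x in at_right t. pw4 a b c p1 p2 p3 p4 x = p3 x"
        using eventually_at_right_real[of t c] 4 ab by (auto simp: pw4_def elim!: eventually_mono)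
    qed (use 4 j ab in \<open>auto simp: pw4_def\<close>)
  next
    case 5 show ?thesis by (rule cont_open[of "{b<..<c}", OF _ _ _ C(3)]) (use 5 ab in \<open>auto simp: pw4_def\<close>)
  next
    case 6 show ?thesis
    proof (rule piecewise_cont[OF C(3) C(4)])
      show "\<forall>\<^sub>F x in at_left t. pw4 a b c p1 p2 p3 p4 x = p3 x"
        using eventually_at_left_real[of b t] 6 ab by (auto simp: pw4_def elim!: eventually_mono)
      show "\<forall>\<^sub>F x in at_right t. pw4 a b c p1 p2 p3 p4 x = p4 x"
        using eventually_at_right_real[of t "t+1"] 6 ab by (auto simp: pw4_def elim!: eventually_mono)
    qed (use 6 j ab in \<open>auto simp: pw4_def\<close>)
  next
    case 7 show ?thesis by (rule cont_open[of "{c<..}", OF _ _ _ C(4)]) (use 7 ab in \<open>auto simp: pw4_def\<close>)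
  qed
qed

lemma deriv_shift: fixes f :: "real \<Rightarrow> real" shows "(f has_real_derivative D) (at (t - x)) \<Longrightarrow> ((\<lambda>t. f (t - x)) has_real_derivative D) (at t)"
  using DERIV_shift[of f D t "-x"] by simp

lemma cont_shift: fixes f :: "real \<Rightarrow> real" shows "isCont f (t - x) \<Longrightarrow> isCont (\<lambda>t. f (t - x)) t"
  using isCont_o2[OF continuous_diff[OF continuous_ident continuous_const], of t x f] by simp

definition Pf :: "real \<Rightarrow> real \<Rightarrow> real" where
  "Pf e = pw4 (-e) 0 e (\<lambda>t. 0) (\<lambda>t. (t+e)^3/(6*e^2)) (\<lambda>t. t + (e-t)^3/(6*e^2)) (\<lambda>t. t)"
definition Rf :: "real \<Rightarrow> real \<Rightarrow> real" where
  "Rf e = pw4 (-e) 0 e (\<lambda>t. 0) (\<lambda>t. (t+e)^2/(2*e^2)) (\<lambda>t. 1 - (e-t)^2/(2*e^2)) (\<lambda>t. 1)"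
definition Bf :: "real \<Rightarrow> real \<Rightarrow> real" where
  "Bf e = pw4 (-e) 0 e (\<lambda>t. 0) (\<lambda>t. (t+e)/e^2) (\<lambda>t. (e-t)/e^2) (\<lambda>t. 0)"

lemma Pf_deriv: "e > 0 \<Longrightarrow> (Pf e has_real_derivative Rf e t) (at t)"
  unfolding Pf_def Rf_def
  by (rule pw4_deriv) (auto intro!: derivative_eq_intros simp: field_simps power2_eq_square power3_eq_cube)

lemma Rf_deriv: "e > 0 \<Longrightarrow> (Rf e has_real_derivative Bf e t) (at t)"
  unfolding Rf_def Bf_def
  by (rule pw4_deriv) (auto intro!: derivative_eq_intros simp: field_simps power2_eq_square)

lemma Bf_cont: "e > 0 \<Longrightarrow> isCont (Bf e) t"
  unfolding Bf_def by (rule pw4_cont) (auto intro!: continuous_intros)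

lemma Bf_nn: "e > 0 \<Longrightarrow> Bf e t \<ge> 0"
  unfolding Bf_def pw4_def by auto

lemma Bf_zero: "e > 0 \<Longrightarrow> e \<le> \<bar>t\<bar> \<Longrightarrow> Bf e t = 0"
  unfolding Bf_def pw4_def by auto

lemma Pf_lo: "e > 0 \<Longrightarrow> t \<le> -e \<Longrightarrow> Pf e t = 0"
  unfolding Pf_def pw4_def by auto
lemma Pf_hi: "e > 0 \<Longrightarrow> e \<le> t \<Longrightarrow> Pf e t = t"
  unfolding Pf_def pw4_def by auto
lemma Rf_lo: "e > 0 \<Longrightarrow> t \<le> -e \<Longrightarrow> Rf e t = 0"
  unfolding Rf_def pw4_def by auto
lemma Rf_hi: "e > 0 \<Longrightarrow> e \<le> t \<Longrightarrow> Rf e t = 1"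
  unfolding Rf_def pw4_def by auto

lemma Pf_approx: assumes e: "e > 0" shows "\<bar>Pf e t - max 0 t\<bar> \<le> e"
proof -
  consider "t \<le> -e" | "-e < t \<and> t \<le> 0" | "0 < t \<and> t \<le> e" | "e < t" by linarith
  thus ?thesis
  proof cases
    case 2
    have "(t+e)^3 \<le> e^3" using 2 by (intro power_mono) auto
    hence "(t+e)^3/(6*e^2) \<le> e^3/(6*e^2)" using e by (intro divide_right_mono) auto
    also have "\<dots> = e/6" using e by (simp add: field_simps power2_eq_square power3_eq_cube)
    finally show ?thesis using 2 e by (auto simp: Pf_def pw4_def)
  next
    case 3
    have "(e-t)^3 \<le> e^3" using 3 by (intro power_mono) auto
    hence "(e-t)^3/(6*e^2) \<le> e^3/(6*e^2)" using e by (intro divide_right_mono) auto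
    also have "\<dots> = e/6" using e by (simp add: field_simps power2_eq_square power3_eq_cube)
    finally show ?thesis using 3 e by (auto simp: Pf_def pw4_def)
  qed (use e in \<open>auto simp: Pf_def pw4_def\<close>)
qed

lemma Bf_int: assumes e: "e > 0" shows "(\<integral>t. Bf e (t - x) \<partial>lborel) = 1"
proof -
  have "(\<integral>t. indicator {x-e..x+e} t *\<^sub>R Bf e (t - x) \<partial>lborel) = Rf e ((x+e) - x) - Rf e ((x-e) - x)"
  proof (rule integral_FTC_atLeastAtMost)
    fix t assume "x - e \<le> t" "t \<le> x + e"
    have "((\<lambda>t. Rf e (t - x)) has_real_derivative Bf e (t - x)) (at t)"
      by (rule deriv_shift[OF Rf_deriv[OF e]])
    thus "((\<lambda>t. Rf e (t - x)) has_vector_derivative Bf e (t - x)) (at t within {x - e..x + e})"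
      by (simp add: has_real_derivative_iff_has_vector_derivative has_vector_derivative_at_within)
  next
    show "continuous_on {x - e..x + e} (\<lambda>t. Bf e (t - x))"
      using Bf_cont[OF e] by (intro continuous_at_imp_continuous_on ballI cont_shift) auto
  qed (use e in auto)
  also have "\<dots> = 1" using e by (simp add: Rf_lo Rf_hi)
  finally have *: "(\<integral>t. indicator {x-e..x+e} t *\<^sub>R Bf e (t - x) \<partial>lborel) = 1" .
  have "(\<lambda>t. indicator {x-e..x+e} t *\<^sub>R Bf e (t - x)) = (\<lambda>t. Bf e (t - x))"
  proof
    fix t
    show "indicator {x-e..x+e} t *\<^sub>R Bf e (t - x) = Bf e (t - x)"
    proof (cases "t \<in> {x-e..x+e}")
      case False hence "e \<le> \<bar>t - x\<bar>" by auto
      thus ?thesis using Bf_zero[OF e] False by simp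
    qed simp
  qed
  thus ?thesis using * by simp
qed


definition phiP :: "real \<Rightarrow> real \<Rightarrow> real \<Rightarrow> real \<Rightarrow> real \<Rightarrow> real" where
  "phiP e x y z t = (z-y)*(Pf e (t-x) - Pf e (t-y)) - (y-x)*(Pf e (t-y) - Pf e (t-z))"
definition phiR :: "real \<Rightarrow> real \<Rightarrow> real \<Rightarrow> real \<Rightarrow> real \<Rightarrow> real" where
  "phiR e x y z t = (z-y)*(Rf e (t-x) - Rf e (t-y)) - (y-x)*(Rf e (t-y) - Rf e (t-z))"
definition phiB :: "real \<Rightarrow> real \<Rightarrow> real \<Rightarrow> real \<Rightarrow> real \<Rightarrow> real" where
  "phiB e x y z t = (z-y)*(Bf e (t-x) - Bf e (t-y)) - (y-x)*(Bf e (t-y) - Bf e (t-z))"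
definition phi0 :: "real \<Rightarrow> real \<Rightarrow> real \<Rightarrow> real \<Rightarrow> real" where
  "phi0 x y z t = (z-y)*(max 0 (t-x) - max 0 (t-y)) - (y-x)*(max 0 (t-y) - max 0 (t-z))"

lemma phiP_deriv: "e > 0 \<Longrightarrow> (phiP e x y z has_real_derivative phiR e x y z t) (at t)"
proof -
  assume e: "e > 0"
  note d = deriv_shift[OF Pf_deriv[OF e]]
  show ?thesis unfolding phiP_def phiR_def
    by (rule DERIV_diff[OF DERIV_cmult[OF DERIV_diff[OF d d]] DERIV_cmult[OF DERIV_diff[OF d d]]])
qed

lemma phiR_deriv: "e > 0 \<Longrightarrow> (phiR e x y z has_real_derivative phiB e x y z t) (at t)"
proof -
  assume e: "e > 0"
  note d = deriv_shift[OF Rf_deriv[OF e]]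
  show ?thesis unfolding phiR_def phiB_def
    by (rule DERIV_diff[OF DERIV_cmult[OF DERIV_diff[OF d d]] DERIV_cmult[OF DERIV_diff[OF d d]]])
qed

lemma phiB_cont: "e > 0 \<Longrightarrow> isCont (phiB e x y z) t"
  unfolding phiB_def
  by (intro continuous_intros cont_shift Bf_cont)

lemma phiP_supp: assumes e: "e > 0" and xyz: "x < y" "y < z" and t: "\<bar>t\<bar> > \<bar>x\<bar> + \<bar>z\<bar> + e"
  shows "phiP e x y z t = 0"
proof (cases "t > 0")
  case True
  hence "e \<le> t - x" "e \<le> t - y" "e \<le> t - z" using t xyz by auto
  thus ?thesis using e by (simp add: phiP_def Pf_hi algebra_simps)
next
  case False
  hence "t - x \<le> -e" "t - y \<le> -e" "t - z \<le> -e" using t xyz by auto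
  thus ?thesis using e by (simp add: phiP_def Pf_lo)
qed

lemma phiR_supp: assumes e: "e > 0" and xyz: "x < y" "y < z" and t: "\<bar>t\<bar> > \<bar>x\<bar> + \<bar>z\<bar> + e"
  shows "phiR e x y z t = 0"
proof (cases "t > 0")
  case True
  hence "e \<le> t - x" "e \<le> t - y" "e \<le> t - z" using t xyz by auto
  thus ?thesis using e by (simp add: phiR_def Rf_hi)
next
  case False
  hence "t - x \<le> -e" "t - y \<le> -e" "t - z \<le> -e" using t xyz by auto
  thus ?thesis using e by (simp add: phiR_def Rf_lo)
qed

lemma phi0_supp: assumes xyz: "x < y" "y < z" and t: "t \<le> x \<or> t \<ge> z"
  shows "phi0 x y z t = 0"
  using assms by (auto simp: phi0_def max_def algebra_simps)

lemma phi0_cont: "isCont (phi0 x y z) t"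
  unfolding phi0_def by (intro continuous_intros)

lemma phiP_approx: assumes e: "e > 0" and xyz: "x < y" "y < z"
  shows "\<bar>phiP e x y z t - phi0 x y z t\<bar> \<le> 2*(z-x)*e"
proof -
  define D where "D s = Pf e s - max 0 s" for s
  have D: "\<bar>D s\<bar> \<le> e" for s unfolding D_def by (rule Pf_approx[OF e])
  have "phiP e x y z t - phi0 x y z t = (z-y)*(D (t-x) - D (t-y)) - (y-x)*(D (t-y) - D (t-z))"
    by (simp add: phiP_def phi0_def D_def algebra_simps)
  also have "\<bar>\<dots>\<bar> \<le> (z-y)*(2*e) + (y-x)*(2*e)"
  proof -
    have a1: "\<bar>D (t-x) - D (t-y)\<bar> \<le> 2*e" using D[of "t-x"] D[of "t-y"] by arith
    have a2: "\<bar>D (t-y) - D (t-z)\<bar> \<le> 2*e" using D[of "t-z"] D[of "t-y"] by arith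
    have "\<bar>(z-y)*(D (t-x) - D (t-y))\<bar> \<le> (z-y)*(2*e)"
      unfolding abs_mult using a1 xyz by (intro mult_mono) auto
    moreover have "\<bar>(y-x)*(D (t-y) - D (t-z))\<bar> \<le> (y-x)*(2*e)"
      unfolding abs_mult using a2 xyz by (intro mult_mono) auto
    ultimately show ?thesis by (smt (verit))
  qed
  finally show ?thesis by (simp add: algebra_simps)
qed

lemma test_funI:
  assumes "\<And>t. (\<phi> has_real_derivative \<phi>' t) (at t)" "\<And>t. isCont \<phi>' t" "\<And>t. \<bar>t\<bar> > R \<Longrightarrow> \<phi> t = 0"
  shows "test_fun \<phi>" "deriv \<phi> = \<phi>'"
proof -
  show d: "deriv \<phi> = \<phi>'" using assms(1) DERIV_imp_deriv by blast
  show "test_fun \<phi>" unfolding test_fun_def d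
    using assms by (auto intro!: continuous_at_imp_continuous_on simp: real_differentiable_def)
qed

lemma int_cs:
  fixes u :: "real \<Rightarrow> real"
  assumes "\<And>t. isCont u t" "\<And>t. \<bar>t\<bar> > R \<Longrightarrow> u t = 0"
  shows "integrable lborel u"
proof -
  have "integrable lborel (\<lambda>t. indicator {-R..R} t *\<^sub>R u t)"
    using assms(1) by (intro borel_integrable_compact) (auto intro!: continuous_at_imp_continuous_on)
  moreover have "(\<lambda>t. indicator {-R..R} t *\<^sub>R u t) = u"
  proof
    fix t show "indicator {-R..R} t *\<^sub>R u t = u t"
      using assms(2)[of t] by (cases "t \<in> {-R..R}") auto
  qed
  ultimately show ?thesis by simp
qed


locale WF =
  fixes k :: int and A A' \<rho> :: real and g h :: "real \<Rightarrow> real"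
  assumes gc: "continuous_on UNIV g" and hL2: "L2 h" and wdg: "weak_deriv g h"
  and eqn: "\<And>\<phi>. test_fun \<phi> \<Longrightarrow> (\<integral>x. (real_of_int k)^2 * g x * \<phi> x + h x * deriv \<phi> x
              + 8 * indicator {A..A'} x * g x * \<phi> x \<partial>lborel) = \<phi> \<rho>"
begin

definition q :: "real \<Rightarrow> real" where "q t = (real_of_int k)^2 + 8 * indicator {A..A'} t"

lemma gcont: "isCont g t"
  using gc by (simp add: continuous_on_eq_continuous_at)

lemma q_bound: "\<bar>q t\<bar> \<le> (real_of_int k)^2 + 8"
  by (auto simp: q_def indicator_def)

lemma int_qgu:
  assumes "\<And>t. isCont u t" "\<And>t. \<bar>t\<bar> > R \<Longrightarrow> u t = 0"
  shows "integrable lborel (\<lambda>t. q t * g t * u t)"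
proof -
  have i: "integrable lborel (\<lambda>t. g t * u t)"
    by (rule int_cs[where R=R]) (use assms gcont in \<open>auto intro!: continuous_intros\<close>)
  have i2: "integrable lborel (\<lambda>t. indicator {A..A'} t *\<^sub>R (g t * u t))"
    by (rule integrable_mult_indicator) (use i in auto)
  have "integrable lborel (\<lambda>t. (real_of_int k)^2 * (g t * u t) + 8 * (indicator {A..A'} t * (g t * u t)))"
    using i i2 by (intro Bochner_Integration.integrable_add integrable_mult_right) auto
  moreover have "(\<lambda>t. (real_of_int k)^2 * (g t * u t) + 8 * (indicator {A..A'} t * (g t * u t))) = (\<lambda>t. q t * g t * u t)"
    by (auto simp: q_def fun_eq_iff algebra_simps)
  ultimately show ?thesis by simp
qed

lemma int_hu:
  assumes "\<And>t. isCont u t" "\<And>t. \<bar>t\<bar> > R \<Longrightarrow> u t = 0"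
  shows "integrable lborel (\<lambda>t. h t * u t)"
proof (rule Bochner_Integration.integrable_bound)
  have h: "h \<in> borel_measurable lborel" "integrable lborel (\<lambda>x. (h x)^2)" using hL2 by (auto simp: L2_def)
  have u2: "integrable lborel (\<lambda>t. (u t)^2)"
    by (rule int_cs[where R=R]) (use assms in \<open>auto intro!: continuous_intros\<close>)
  show "integrable lborel (\<lambda>t. ((h t)^2 + (u t)^2) / 2)"
    using h(2) u2 by (intro integrable_divide Bochner_Integration.integrable_add)
  have "u \<in> borel_measurable borel"
    using assms(1) by (intro borel_measurable_continuous_onI continuous_at_imp_continuous_on) auto
  thus "(\<lambda>t. h t * u t) \<in> borel_measurable lborel" using h(1) by measurable
  show "AE x in lborel. norm (h x * u x) \<le> norm (((h x)^2 + (u x)^2) / 2)"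
  proof (intro AE_I2)
    fix x
    have "0 \<le> (\<bar>h x\<bar> - \<bar>u x\<bar>)^2" by simp
    hence "2 * (\<bar>h x\<bar> * \<bar>u x\<bar>) \<le> (h x)^2 + (u x)^2" by (simp add: power2_eq_square algebra_simps)
    thus "norm (h x * u x) \<le> norm (((h x)^2 + (u x)^2) / 2)" by (simp add: abs_mult)
  qed
qed

lemma keye:
  assumes e: "e > 0" and xyz: "x < y" "y < z"
  shows "(\<integral>t. q t * g t * phiP e x y z t \<partial>lborel) - (\<integral>t. g t * phiB e x y z t \<partial>lborel) = phiP e x y z \<rho>"
proof -
  let ?R = "\<bar>x\<bar> + \<bar>z\<bar> + e"
  note cR = DERIV_isCont[OF phiR_deriv[OF e]]
  note cP = DERIV_isCont[OF phiP_deriv[OF e]]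
  have tP: "test_fun (phiP e x y z)" "deriv (phiP e x y z) = phiR e x y z"
    by (rule test_funI[where R="?R"], rule phiP_deriv[OF e], rule cR, rule phiP_supp[OF e xyz], simp)+
  have tR: "test_fun (phiR e x y z)" "deriv (phiR e x y z) = phiB e x y z"
    by (rule test_funI[where R="?R"], rule phiR_deriv[OF e], rule phiB_cont[OF e], rule phiR_supp[OF e xyz], simp)+
  have w: "(\<integral>t. g t * phiB e x y z t \<partial>lborel) = - (\<integral>t. h t * phiR e x y z t \<partial>lborel)"
    using wdg tR unfolding weak_deriv_def by auto
  have E: "(\<integral>t. (real_of_int k)^2 * g t * phiP e x y z t + h t * phiR e x y z t
              + 8 * indicator {A..A'} t * g t * phiP e x y z t \<partial>lborel) = phiP e x y z \<rho>"
    using eqn[OF tP(1)] tP(2) by simp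
  have "(\<lambda>t. (real_of_int k)^2 * g t * phiP e x y z t + h t * phiR e x y z t
              + 8 * indicator {A..A'} t * g t * phiP e x y z t) = (\<lambda>t. q t * g t * phiP e x y z t + h t * phiR e x y z t)"
    by (auto simp: fun_eq_iff q_def algebra_simps)
  with E have E2: "(\<integral>t. q t * g t * phiP e x y z t + h t * phiR e x y z t \<partial>lborel) = phiP e x y z \<rho>" by simp
  have i1: "integrable lborel (\<lambda>t. q t * g t * phiP e x y z t)"
    by (rule int_qgu[where R="?R"]) (use cP phiP_supp[OF e xyz] in auto)
  have i2: "integrable lborel (\<lambda>t. h t * phiR e x y z t)"
    by (rule int_hu[where R="?R"]) (use cR phiR_supp[OF e xyz] in auto)
  have "(\<integral>t. q t * g t * phiP e x y z t \<partial>lborel) + (\<integral>t. h t * phiR e x y z t \<partial>lborel) = phiP e x y z \<rho>"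
    using E2 Bochner_Integration.integral_add[OF i1 i2] by simp
  thus ?thesis using w by simp
qed

lemma int_gB: "e > 0 \<Longrightarrow> integrable lborel (\<lambda>t. g t * Bf e (t - c))"
  by (rule int_cs[where R="\<bar>c\<bar> + e"]) (auto intro!: continuous_intros gcont cont_shift Bf_cont Bf_zero)

lemma int_B: "e > 0 \<Longrightarrow> integrable lborel (\<lambda>t. Bf e (t - c))"
  by (rule int_cs[where R="\<bar>c\<bar> + e"]) (auto intro!: continuous_intros cont_shift Bf_cont Bf_zero)

lemma avg_bound:
  assumes e: "e > 0" and b: "\<And>t. \<bar>t - c\<bar> < e \<Longrightarrow> \<bar>g t - g c\<bar> \<le> \<eta>"
  shows "\<bar>(\<integral>t. g t * Bf e (t - c) \<partial>lborel) - g c\<bar> \<le> \<eta>"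
proof -
  have "(\<integral>t. g t * Bf e (t - c) \<partial>lborel) - g c = (\<integral>t. g t * Bf e (t - c) \<partial>lborel) - g c * (\<integral>t. Bf e (t - c) \<partial>lborel)"
    using Bf_int[OF e] by simp
  also have "\<dots> = (\<integral>t. g t * Bf e (t - c) - g c * Bf e (t - c) \<partial>lborel)"
    using int_gB[OF e] int_B[OF e] by simp
  also have "\<dots> = (\<integral>t. (g t - g c) * Bf e (t - c) \<partial>lborel)"
    by (simp add: algebra_simps)
  finally have eq: "(\<integral>t. g t * Bf e (t - c) \<partial>lborel) - g c = (\<integral>t. (g t - g c) * Bf e (t - c) \<partial>lborel)" .
  have "norm (\<integral>t. (g t - g c) * Bf e (t - c) \<partial>lborel) \<le> (\<integral>t. \<eta> * Bf e (t - c) \<partial>lborel)"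
  proof (rule Bochner_Integration.integral_norm_bound_integral)
    show "integrable lborel (\<lambda>t. (g t - g c) * Bf e (t - c))"
      using int_gB[OF e] int_B[OF e] by (simp add: algebra_simps)
    show "integrable lborel (\<lambda>t. \<eta> * Bf e (t - c))" using int_B[OF e] by simp
    fix t
    show "norm ((g t - g c) * Bf e (t - c)) \<le> \<eta> * Bf e (t - c)"
    proof (cases "\<bar>t - c\<bar> < e")
      case True thus ?thesis using b[OF True] Bf_nn[OF e, of "t - c"] by (simp add: abs_mult mult_right_mono)
    next
      case False thus ?thesis using Bf_zero[OF e, of "t-c"] by simp
    qed
  qed
  also have "\<dots> = \<eta>" using Bf_int[OF e] by simp
  finally show ?thesis using eq by simp
qed

lemma avg_lim: "(\<lambda>n. (\<integral>t. g t * Bf (inverse (real (Suc n))) (t - c) \<partial>lborel)) \<longlonglongrightarrow> g c"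
proof (rule LIMSEQ_I)
  fix r :: real assume r: "r > 0"
  obtain d where d: "d > 0" "\<And>t. dist t c < d \<Longrightarrow> dist (g t) (g c) < r/2"
    using gcont[of c] r unfolding continuous_at_eps_delta by (metis half_gt_zero)
  obtain N where N: "inverse (real (Suc N)) < d" using reals_Archimedean[OF d(1)] by blast
  show "\<exists>no. \<forall>n\<ge>no. norm ((\<integral>t. g t * Bf (inverse (real (Suc n))) (t - c) \<partial>lborel) - g c) < r"
  proof (intro exI allI impI)
    fix n assume n: "N \<le> n"
    have en: "inverse (real (Suc n)) \<le> inverse (real (Suc N))" using n by (simp add: field_simps)
    have "\<bar>(\<integral>t. g t * Bf (inverse (real (Suc n))) (t - c) \<partial>lborel) - g c\<bar> \<le> r/2"
    proof (rule avg_bound)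
      fix t assume tc: "\<bar>t - c\<bar> < inverse (real (Suc n))"
      have "\<bar>t - c\<bar> < d" using en N tc by linarith
      hence "dist t c < d" by (simp add: dist_real_def)
      thus "\<bar>g t - g c\<bar> \<le> r/2" using d(2)[of t] by (simp add: dist_real_def)
    qed simp
    thus "norm ((\<integral>t. g t * Bf (inverse (real (Suc n))) (t - c) \<partial>lborel) - g c) < r" using r by simp
  qed
qed

lemma en_pos: "inverse (real (Suc n)) > 0" by simp
lemma en_le1: "inverse (real (Suc n)) \<le> 1" by (simp add: field_simps)

lemma Q_lim: assumes xyz: "x < y" "y < z"
  shows "(\<lambda>n. (\<integral>t. q t * g t * phiP (inverse (real (Suc n))) x y z t \<partial>lborel))
     \<longlonglongrightarrow> (\<integral>t. q t * g t * phi0 x y z t \<partial>lborel)"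
proof -
  define R1 where "R1 = \<bar>x\<bar> + \<bar>z\<bar> + 1"
  define W where "W t = indicator {-R1..R1} t * \<bar>g t\<bar>" for t
  define G where "G = (\<integral>t. W t \<partial>lborel)"
  define C where "C = ((real_of_int k)^2 + 8) * (2 * (z - x)) * G"
  have iG: "integrable lborel W"
  proof -
    have "integrable lborel (\<lambda>t. indicator {-R1..R1} t *\<^sub>R \<bar>g t\<bar>)"
      by (intro borel_integrable_compact) (auto intro!: continuous_intros continuous_at_imp_continuous_on gcont)
    thus ?thesis unfolding W_def by simp
  qed
  have i0: "integrable lborel (\<lambda>t. q t * g t * phi0 x y z t)"
  proof (rule int_qgu[where R="R1"])
    show "isCont (phi0 x y z) t" for t by (rule phi0_cont)
    fix t assume "\<bar>t\<bar> > R1"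
    hence "t \<le> x \<or> z \<le> t" unfolding R1_def by arith
    thus "phi0 x y z t = 0" by (rule phi0_supp[OF xyz])
  qed
  have bnd: "norm ((\<integral>t. q t * g t * phiP (inverse (real (Suc n))) x y z t \<partial>lborel) - (\<integral>t. q t * g t * phi0 x y z t \<partial>lborel))
      \<le> C * inverse (real (Suc n))" for n
  proof -
    define e where "e = inverse (real (Suc n))"
    define c where "c = ((real_of_int k)^2 + 8) * (2 * (z - x) * e)"
    have e: "e > 0" "e \<le> 1" unfolding e_def using en_pos en_le1 by auto
    have iP: "integrable lborel (\<lambda>t. q t * g t * phiP e x y z t)"
      by (rule int_qgu[where R="\<bar>x\<bar> + \<bar>z\<bar> + e"]) (use phiP_supp[OF e(1) xyz] DERIV_isCont[OF phiP_deriv[OF e(1)]] in auto)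
    have "(\<integral>t. q t * g t * phiP e x y z t \<partial>lborel) - (\<integral>t. q t * g t * phi0 x y z t \<partial>lborel)
        = (\<integral>t. q t * g t * phiP e x y z t - q t * g t * phi0 x y z t \<partial>lborel)"
      by (rule Bochner_Integration.integral_diff[OF iP i0, symmetric])
    moreover have "norm (\<integral>t. q t * g t * phiP e x y z t - q t * g t * phi0 x y z t \<partial>lborel) \<le> (\<integral>t. c * W t \<partial>lborel)"
    proof (rule Bochner_Integration.integral_norm_bound_integral)
      show "integrable lborel (\<lambda>t. q t * g t * phiP e x y z t - q t * g t * phi0 x y z t)" using iP i0 by simp
      show "integrable lborel (\<lambda>t. c * W t)"
        using iG by (rule integrable_mult_right)
      fix t
      show "norm (q t * g t * phiP e x y z t - q t * g t * phi0 x y z t) \<le> c * W t"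
      proof (cases "t \<in> {-R1..R1}")
        case True
        have Wt: "W t = \<bar>g t\<bar>" using True by (simp add: W_def)
        have "q t * g t * phiP e x y z t - q t * g t * phi0 x y z t = (q t * g t) * (phiP e x y z t - phi0 x y z t)"
          by (simp add: right_diff_distrib)
        hence "norm (q t * g t * phiP e x y z t - q t * g t * phi0 x y z t) = \<bar>q t\<bar> * \<bar>g t\<bar> * \<bar>phiP e x y z t - phi0 x y z t\<bar>"
          by (simp add: abs_mult)
        also have "\<dots> \<le> ((real_of_int k)^2 + 8) * \<bar>g t\<bar> * (2 * (z - x) * e)"
        proof (rule mult_mono)
          show "\<bar>q t\<bar> * \<bar>g t\<bar> \<le> ((real_of_int k)^2 + 8) * \<bar>g t\<bar>"
            using q_bound[of t] by (rule mult_right_mono) simp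
        qed (use phiP_approx[OF e(1) xyz, of t] in auto)
        also have "\<dots> = c * W t" unfolding Wt c_def by (simp only: mult_ac)
        finally show ?thesis .
      next
        case False
        hence t: "\<bar>t\<bar> > \<bar>x\<bar> + \<bar>z\<bar> + e" "t \<le> x \<or> t \<ge> z" using e unfolding R1_def by auto
        have "W t = 0" using False by (simp add: W_def)
        thus ?thesis using phiP_supp[OF e(1) xyz t(1)] phi0_supp[OF xyz t(2)] by simp
      qed
    qed
    moreover have "(\<integral>t. c * W t \<partial>lborel) = c * G" unfolding G_def by (rule integral_mult_right_zero)
    moreover have "c * G = C * e" unfolding C_def c_def by (simp only: mult_ac)
    ultimately have "norm ((\<integral>t. q t * g t * phiP e x y z t \<partial>lborel) - (\<integral>t. q t * g t * phi0 x y z t \<partial>lborel)) \<le> C * e"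
      by simp
    thus ?thesis unfolding e_def .
  qed
  have lim0: "(\<lambda>n. C * inverse (real (Suc n))) \<longlonglongrightarrow> 0"
    using tendsto_mult_left[OF LIMSEQ_inverse_real_of_nat, of C] by simp
  have "(\<lambda>n. (\<integral>t. q t * g t * phiP (inverse (real (Suc n))) x y z t \<partial>lborel) - (\<integral>t. q t * g t * phi0 x y z t \<partial>lborel)) \<longlonglongrightarrow> 0"
    by (rule Lim_null_comparison[OF _ lim0]) (intro always_eventually allI bnd)
  thus ?thesis by (rule LIM_zero_cancel)
qed

lemma P_lim: assumes xyz: "x < y" "y < z"
  shows "(\<lambda>n. phiP (inverse (real (Suc n))) x y z \<rho>) \<longlonglongrightarrow> phi0 x y z \<rho>"
proof -
  have lim0: "(\<lambda>n. 2 * (z - x) * inverse (real (Suc n))) \<longlonglongrightarrow> 0"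
    using tendsto_mult_left[OF LIMSEQ_inverse_real_of_nat, of "2 * (z - x)"] by simp
  have "(\<lambda>n. phiP (inverse (real (Suc n))) x y z \<rho> - phi0 x y z \<rho>) \<longlonglongrightarrow> 0"
    by (rule Lim_null_comparison[OF _ lim0]) (use phiP_approx[OF en_pos xyz] in \<open>intro always_eventually allI; simp\<close>)
  thus ?thesis by (rule LIM_zero_cancel)
qed

lemma S_eq: assumes e: "e > 0"
  shows "(\<integral>t. g t * phiB e x y z t \<partial>lborel) =
    (z-y) * ((\<integral>t. g t * Bf e (t - x) \<partial>lborel) - (\<integral>t. g t * Bf e (t - y) \<partial>lborel))
    - (y-x) * ((\<integral>t. g t * Bf e (t - y) \<partial>lborel) - (\<integral>t. g t * Bf e (t - z) \<partial>lborel))"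
proof -
  note ix = int_gB[OF e, of x] and iy = int_gB[OF e, of y] and iz = int_gB[OF e, of z]
  have "(\<lambda>t. g t * phiB e x y z t) = (\<lambda>t. (z-y) * (g t * Bf e (t - x) - g t * Bf e (t - y)) - (y-x) * (g t * Bf e (t - y) - g t * Bf e (t - z)))"
    by (auto simp: fun_eq_iff phiB_def algebra_simps)
  hence "(\<integral>t. g t * phiB e x y z t \<partial>lborel) = (\<integral>t. (z-y) * (g t * Bf e (t - x) - g t * Bf e (t - y)) - (y-x) * (g t * Bf e (t - y) - g t * Bf e (t - z)) \<partial>lborel)"
    by simp
  also have "\<dots> = (\<integral>t. (z-y) * (g t * Bf e (t - x) - g t * Bf e (t - y)) \<partial>lborel) - (\<integral>t. (y-x) * (g t * Bf e (t - y) - g t * Bf e (t - z)) \<partial>lborel)"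
    by (rule Bochner_Integration.integral_diff; intro integrable_mult_right Bochner_Integration.integrable_diff ix iy iz)
  also have "(\<integral>t. (z-y) * (g t * Bf e (t - x) - g t * Bf e (t - y)) \<partial>lborel) = (z-y) * ((\<integral>t. g t * Bf e (t - x) \<partial>lborel) - (\<integral>t. g t * Bf e (t - y) \<partial>lborel))"
    using Bochner_Integration.integral_diff[OF ix iy] by simp
  also have "(\<integral>t. (y-x) * (g t * Bf e (t - y) - g t * Bf e (t - z)) \<partial>lborel) = (y-x) * ((\<integral>t. g t * Bf e (t - y) \<partial>lborel) - (\<integral>t. g t * Bf e (t - z) \<partial>lborel))"
    using Bochner_Integration.integral_diff[OF iy iz] by simp
  finally show ?thesis .
qed

lemma F3: assumes xyz: "x < y" "y < z"
  shows "(z-y) * g x - (z-x) * g y + (y-x) * g z = (\<integral>t. q t * g t * phi0 x y z t \<partial>lborel) - phi0 x y z \<rho>"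
proof -
  define E where "E n = inverse (real (Suc n))" for n :: nat
  define a where "a c n = (\<integral>t. g t * Bf (E n) (t - c) \<partial>lborel)" for c n
  have Ep: "E n > 0" for n unfolding E_def by simp
  have al: "a c \<longlonglongrightarrow> g c" for c unfolding a_def E_def by (rule avg_lim)
  have "(\<lambda>n. (\<integral>t. q t * g t * phiP (E n) x y z t \<partial>lborel) - ((z-y) * (a x n - a y n) - (y-x) * (a y n - a z n)))
     \<longlonglongrightarrow> (\<integral>t. q t * g t * phi0 x y z t \<partial>lborel) - ((z-y) * (g x - g y) - (y-x) * (g y - g z))"
    unfolding E_def using Q_lim[OF xyz] al by (intro tendsto_intros)
  moreover have eqf: "(\<lambda>n. (\<integral>t. q t * g t * phiP (E n) x y z t \<partial>lborel) - ((z-y) * (a x n - a y n) - (y-x) * (a y n - a z n)))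
     = (\<lambda>n. phiP (E n) x y z \<rho>)"
  proof
    fix n
    show "(\<integral>t. q t * g t * phiP (E n) x y z t \<partial>lborel) - ((z-y) * (a x n - a y n) - (y-x) * (a y n - a z n)) = phiP (E n) x y z \<rho>"
      using keye[OF Ep[of n] xyz] S_eq[OF Ep[of n], of x y z] unfolding a_def by linarith
  qed
  moreover have "(\<lambda>n. phiP (E n) x y z \<rho>) \<longlonglongrightarrow> phi0 x y z \<rho>" unfolding E_def by (rule P_lim[OF xyz])
  ultimately have "(\<integral>t. q t * g t * phi0 x y z t \<partial>lborel) - ((z-y) * (g x - g y) - (y-x) * (g y - g z)) = phi0 x y z \<rho>"
    by (simp only: LIMSEQ_unique)
  thus ?thesis by (simp add: algebra_simps)
qed

end

context WF begin

definition f :: "real \<Rightarrow> real" where "f t = q t * g t"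
definition FF :: "real \<Rightarrow> real \<Rightarrow> real" where "FF a s = integral {a..s} f"
definition HH :: "real \<Rightarrow> real \<Rightarrow> real" where "HH a s = integral {a..s} (FF a)"

lemma ind_cont: "t \<noteq> A \<Longrightarrow> t \<noteq> A' \<Longrightarrow> isCont (indicator {A..A'} :: real \<Rightarrow> real) t"
proof -
  assume t: "t \<noteq> A" "t \<noteq> A'"
  consider "t < A" | "A < t \<and> t < A'" | "t > A'" | "A \<ge> A'" using t by linarith
  thus ?thesis
  proof cases
    case 1 show ?thesis by (rule cont_open[of "{..<A}" _ _ "\<lambda>_. 0"]) (use 1 in \<open>auto simp: indicator_def\<close>)
  next
    case 2 show ?thesis by (rule cont_open[of "{A<..<A'}" _ _ "\<lambda>_. 1"]) (use 2 in \<open>auto simp: indicator_def\<close>)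
  next
    case 3 show ?thesis by (rule cont_open[of "{A'<..}" _ _ "\<lambda>_. 0"]) (use 3 in \<open>auto simp: indicator_def\<close>)
  next
    case 4
    show ?thesis
    proof (cases "t < A")
      case True show ?thesis by (rule cont_open[of "{..<A}" _ _ "\<lambda>_. 0"]) (use True in \<open>auto simp: indicator_def\<close>)
    next
      case False hence "t > A" using t by simp
      show ?thesis by (rule cont_open[of "{A<..}" _ _ "\<lambda>_. 0"]) (use \<open>t > A\<close> 4 in \<open>auto simp: indicator_def\<close>)
    qed
  qed
qed

lemma f_cont: "t \<noteq> A \<Longrightarrow> t \<noteq> A' \<Longrightarrow> isCont f t"
  unfolding f_def q_def by (intro continuous_intros ind_cont gcont)

lemma f_int: "f integrable_on {a..b}"
proof -
  have g1: "g integrable_on {a..b}" using gc by (intro integrable_continuous_interval continuous_on_subset[OF gc]) auto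
  have "(\<lambda>t. if t \<in> {A..A'} then g t else 0) integrable_on {a..b}"
    unfolding integrable_restrict_Int by (auto intro!: integrable_continuous_interval continuous_on_subset[OF gc])
  hence g2: "(\<lambda>t. indicator {A..A'} t * g t) integrable_on {a..b}"
    by (rule integrable_eq) (auto simp: indicator_def)
  have "(\<lambda>t. (real_of_int k)^2 * g t + 8 * (indicator {A..A'} t * g t)) integrable_on {a..b}"
    using g1 g2 by (intro integrable_add integrable_on_mult_right)
  thus ?thesis by (rule integrable_eq) (auto simp: f_def q_def algebra_simps)
qed

lemma FF_cont: "continuous_on {a..b} (FF a)"
  unfolding FF_def by (rule indefinite_integral_continuous_1[OF f_int])

lemma FF_isCont: "t > a \<Longrightarrow> isCont (FF a) t"
  by (rule continuous_on_interior[OF FF_cont[of a "t+1"]]) auto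

lemma FF_deriv: assumes t: "t > a" "t \<noteq> A" "t \<noteq> A'"
  shows "(FF a has_real_derivative f t) (at t)"
proof -
  have "((\<lambda>u. integral {a..u} f) has_vector_derivative f t) (at t within ({a..t+1} - {A,A'}))"
    by (rule integral_has_vector_derivative_continuous_at[OF f_int]) (use t f_cont[of t] in \<open>auto intro: continuous_at_imp_continuous_within\<close>)
  hence "((\<lambda>u. integral {a..u} f) has_vector_derivative f t) (at t within ({a<..<t+1} - {A,A'}))"
    by (rule has_vector_derivative_within_subset) auto
  moreover have "at t within ({a<..<t+1} - {A,A'}) = at t"
    using t by (intro at_within_open) auto
  ultimately show ?thesis unfolding FF_def by (simp add: has_real_derivative_iff_has_vector_derivative)
qed

lemma HH_deriv: assumes t: "t > a" shows "(HH a has_real_derivative FF a t) (at t)"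
proof -
  have "((\<lambda>u. integral {a..u} (FF a)) has_vector_derivative FF a t) (at t within {a..t+1})"
    by (rule integral_has_vector_derivative[OF FF_cont]) (use t in auto)
  hence "((\<lambda>u. integral {a..u} (FF a)) has_vector_derivative FF a t) (at t within {a<..<t+1})"
    by (rule has_vector_derivative_within_subset) auto
  moreover have "at t within {a<..<t+1} = at t"
    using t by (intro at_within_open) auto
  ultimately show ?thesis unfolding HH_def by (simp add: has_real_derivative_iff_has_vector_derivative)
qed

lemma HH_cont: "continuous_on {a..b} (HH a)"
  unfolding HH_def by (rule indefinite_integral_continuous_1[OF integrable_continuous_interval[OF FF_cont]])

lemma int_phi0: assumes xyz: "x < y" "y < z" shows "integrable lborel (\<lambda>t. q t * g t * phi0 x y z t)"
proof (rule int_qgu[where R="\<bar>x\<bar> + \<bar>z\<bar> + 1"])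
  show "isCont (phi0 x y z) t" for t by (rule phi0_cont)
  fix t assume "\<bar>t\<bar> > \<bar>x\<bar> + \<bar>z\<bar> + 1"
  hence "t \<le> x \<or> z \<le> t" by arith
  thus "phi0 x y z t = 0" by (rule phi0_supp[OF xyz])
qed

lemma TI: assumes a: "a \<le> x" and xyz: "x < y" "y < z"
  shows "(\<integral>t. q t * g t * phi0 x y z t \<partial>lborel) = (z-y) * HH a x - (z-x) * HH a y + (y-x) * HH a z"
proof -
  define b where "b = z + 1"
  have Fc: "continuous_on {x..z} (FF a)" by (rule continuous_on_subset[OF FF_cont[of a b]]) (use a b_def in auto)
  have Hc: "continuous_on {x..z} (HH a)" by (rule continuous_on_subset[OF HH_cont[of a b]]) (use a b_def in auto)
  define G1 where "G1 t = (z-y) * (FF a t * (t - x) - HH a t)" for t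
  define G2 where "G2 t = (y-x) * (FF a t * (z - t) + HH a t)" for t
  have h1: "((\<lambda>t. (z-y) * (f t * (t - x))) has_integral (G1 y - G1 x)) {x..y}"
  proof (rule fundamental_theorem_of_calculus_interior_strong[where S="{A,A'}"])
    show "continuous_on {x..y} G1" unfolding G1_def
      by (intro continuous_intros continuous_on_subset[OF Fc] continuous_on_subset[OF Hc]) (use xyz in auto)
    fix t assume t: "t \<in> {x<..<y} - {A,A'}"
    hence ta: "t > a" "t \<noteq> A" "t \<noteq> A'" using a by auto
    have "(G1 has_real_derivative (z-y) * ((f t * (t - x) + 1 * FF a t) - FF a t)) (at t)"
      unfolding G1_def
      by (rule DERIV_cmult[OF DERIV_diff[OF DERIV_mult[OF FF_deriv[OF ta] DERIV_diff[OF DERIV_ident DERIV_const, simplified]] HH_deriv[OF ta(1)]]])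
    thus "(G1 has_vector_derivative (z-y) * (f t * (t - x))) (at t)"
      by (simp add: has_real_derivative_iff_has_vector_derivative)
  qed (use xyz in auto)
  have h1': "((\<lambda>t. f t * phi0 x y z t) has_integral (G1 y - G1 x)) {x..y}"
    by (rule has_integral_eq[OF _ h1]) (use xyz in \<open>auto simp: phi0_def algebra_simps max_def\<close>)
  have h2: "((\<lambda>t. (y-x) * (f t * (z - t))) has_integral (G2 z - G2 y)) {y..z}"
  proof (rule fundamental_theorem_of_calculus_interior_strong[where S="{A,A'}"])
    show "continuous_on {y..z} G2" unfolding G2_def
      by (intro continuous_intros continuous_on_subset[OF Fc] continuous_on_subset[OF Hc]) (use xyz in auto)
    fix t assume t: "t \<in> {y<..<z} - {A,A'}"
    hence ta: "t > a" "t \<noteq> A" "t \<noteq> A'" using a xyz by auto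
    have "(G2 has_real_derivative (y-x) * ((f t * (z - t) + (0 - 1) * FF a t) + FF a t)) (at t)"
      unfolding G2_def
      by (rule DERIV_cmult[OF DERIV_add[OF DERIV_mult[OF FF_deriv[OF ta] DERIV_diff[OF DERIV_const DERIV_ident]] HH_deriv[OF ta(1)]]])
    thus "(G2 has_vector_derivative (y-x) * (f t * (z - t))) (at t)"
      by (simp add: has_real_derivative_iff_has_vector_derivative)
  qed (use xyz in auto)
  have h2': "((\<lambda>t. f t * phi0 x y z t) has_integral (G2 z - G2 y)) {y..z}"
    by (rule has_integral_eq[OF _ h2]) (use xyz in \<open>auto simp: phi0_def algebra_simps max_def\<close>)
  have h: "((\<lambda>t. f t * phi0 x y z t) has_integral ((G1 y - G1 x) + (G2 z - G2 y))) {x..z}"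
    by (rule has_integral_combine[OF _ _ h1' h2']) (use xyz in auto)
  have hU: "((\<lambda>t. f t * phi0 x y z t) has_integral ((G1 y - G1 x) + (G2 z - G2 y))) UNIV"
  proof (rule has_integral_on_superset[OF h])
    fix t assume "t \<notin> {x..z}"
    hence "t \<le> x \<or> z \<le> t" by auto
    thus "f t * phi0 x y z t = 0" using phi0_supp[OF xyz] by simp
  qed simp
  have "((\<lambda>t. q t * g t * phi0 x y z t) has_integral (\<integral>t. q t * g t * phi0 x y z t \<partial>lborel)) UNIV"
    by (rule has_integral_integral_lborel[OF int_phi0[OF xyz]])
  hence "((\<lambda>t. f t * phi0 x y z t) has_integral (\<integral>t. q t * g t * phi0 x y z t \<partial>lborel)) UNIV"
    by (simp add: f_def)
  hence "(\<integral>t. q t * g t * phi0 x y z t \<partial>lborel) = (G1 y - G1 x) + (G2 z - G2 y)"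
    using hU has_integral_unique by blast
  also have "\<dots> = (z-y) * HH a x - (z-x) * HH a y + (y-x) * HH a z"
    by (simp add: G1_def G2_def algebra_simps)
  finally show ?thesis .
qed

definition PP :: "real \<Rightarrow> real \<Rightarrow> real" where "PP a t = g t - HH a t + max 0 (\<rho> - t)"

lemma collin: assumes a: "a \<le> x" and xyz: "x < y" "y < z"
  shows "(z-y) * PP a x - (z-x) * PP a y + (y-x) * PP a z = 0"
proof -
  have "phi0 x y z \<rho> = (z-y) * max 0 (\<rho> - x) - (z-x) * max 0 (\<rho> - y) + (y-x) * max 0 (\<rho> - z)"
    by (simp add: phi0_def algebra_simps)
  thus ?thesis using F3[OF xyz] TI[OF a xyz] by (simp add: PP_def algebra_simps)
qed

lemma rep: "\<exists>c0 c1. \<forall>t\<ge>a. g t = HH a t - max 0 (\<rho> - t) + c0 + c1 * t"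
proof -
  define c1 where "c1 = PP a (a+1) - PP a a"
  define c0 where "c0 = PP a a - a * c1"
  have "PP a t = c0 + c1 * t" if t: "t \<ge> a" for t
  proof -
    consider "t = a" | "a < t \<and> t < a + 1" | "t = a + 1" | "t > a + 1" using t by linarith
    thus ?thesis
    proof cases
      case 2
      have "(a+1-t) * PP a a - 1 * PP a t + (t-a) * PP a (a+1) = 0"
        using collin[of a a t "a+1"] 2 by simp
      thus ?thesis by (simp add: c0_def c1_def algebra_simps)
    next
      case 4
      have "(t-(a+1)) * PP a a - (t-a) * PP a (a+1) + 1 * PP a t = 0"
        using collin[of a a "a+1" t] 4 by simp
      thus ?thesis by (simp add: c0_def c1_def algebra_simps)
    qed (auto simp: c0_def c1_def algebra_simps)
  qed
  hence "\<forall>t\<ge>a. g t = HH a t - max 0 (\<rho> - t) + c0 + c1 * t" by (auto simp: PP_def algebra_simps)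
  thus ?thesis by blast
qed

lemma loc:
  assumes t: "t \<noteq> \<rho>" and a: "a < t" "a < \<rho>"
  shows "\<exists>S c. open S \<and> t \<in> S \<and> S \<subseteq> {a<..} \<and> \<rho> \<notin> S \<and> (\<forall>s\<in>S. (g has_real_derivative FF a s + c) (at s))"
proof -
  obtain c0 c1 where r: "\<forall>t\<ge>a. g t = HH a t - max 0 (\<rho> - t) + c0 + c1 * t" using rep by blast
  show ?thesis
  proof (cases "t < \<rho>")
    case True
    have "\<forall>s\<in>{a<..<\<rho>}. (g has_real_derivative FF a s + (1 + c1)) (at s)"
    proof
      fix s assume s: "s \<in> {a<..<\<rho>}"
      show "(g has_real_derivative FF a s + (1 + c1)) (at s)"
      proof (rule deriv_open[of "{a<..<\<rho>}" s g "\<lambda>s. HH a s - (\<rho> - s) + c0 + c1 * s"])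
        show "((\<lambda>s. HH a s - (\<rho> - s) + c0 + c1 * s) has_real_derivative FF a s - (0 - 1) + 0 + c1 * 1) (at s)"
          using s by (intro DERIV_add DERIV_diff HH_deriv DERIV_cmult DERIV_ident DERIV_const) auto
        show "\<And>x. x \<in> {a<..<\<rho>} \<Longrightarrow> g x = HH a x - (\<rho> - x) + c0 + c1 * x" using r by auto
      qed (use s in auto)
    qed
    thus ?thesis using True a by (intro exI[of _ "{a<..<\<rho>}"] exI[of _ "1 + c1"]) auto
  next
    case False hence tr: "t > \<rho>" using t by simp
    have "\<forall>s\<in>{\<rho><..}. (g has_real_derivative FF a s + c1) (at s)"
    proof
      fix s assume s: "s \<in> {\<rho><..}"
      show "(g has_real_derivative FF a s + c1) (at s)"
      proof (rule deriv_open[of "{\<rho><..}" s g "\<lambda>s. HH a s + c0 + c1 * s"])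
        show "((\<lambda>s. HH a s + c0 + c1 * s) has_real_derivative FF a s + 0 + c1 * 1) (at s)"
          using s a by (intro DERIV_add HH_deriv DERIV_cmult DERIV_ident DERIV_const) auto
        show "\<And>x. x \<in> {\<rho><..} \<Longrightarrow> g x = HH a x + c0 + c1 * x" using r a by auto
      qed (use s in auto)
    qed
    thus ?thesis using tr a by (intro exI[of _ "{\<rho><..}"] exI[of _ "c1"]) auto
  qed
qed

lemma I1: "t \<noteq> \<rho> \<Longrightarrow> (g has_real_derivative deriv g t) (at t)"
proof -
  assume t: "t \<noteq> \<rho>"
  have m: "min t \<rho> - 1 < t" "min t \<rho> - 1 < \<rho>" by auto
  obtain S c where S: "open S" "t \<in> S" "\<forall>s\<in>S. (g has_real_derivative FF (min t \<rho> - 1) s + c) (at s)"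
    using loc[OF t m] by blast
  thus ?thesis using DERIV_imp_deriv by metis
qed

lemma I23: assumes t: "t \<noteq> \<rho>"
  shows "isCont (deriv g) t" and "t \<noteq> A \<Longrightarrow> t \<noteq> A' \<Longrightarrow> (deriv g has_real_derivative q t * g t) (at t)"
proof -
  define a where "a = min t \<rho> - 1"
  have m: "a < t" "a < \<rho>" unfolding a_def by auto
  obtain S c where S: "open S" "t \<in> S" "S \<subseteq> {a<..}" "\<forall>s\<in>S. (g has_real_derivative FF a s + c) (at s)"
    using loc[OF t m] by blast
  have dg: "\<And>s. s \<in> S \<Longrightarrow> deriv g s = FF a s + c" using S(4) DERIV_imp_deriv by blast
  show "isCont (deriv g) t"
    by (rule cont_open[OF S(1,2) dg]) (use FF_isCont[of a t] S in \<open>auto intro!: continuous_intros\<close>)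
  assume tA: "t \<noteq> A" "t \<noteq> A'"
  have ta: "t > a" using S by auto
  show "(deriv g has_real_derivative q t * g t) (at t)"
  proof -
    have "(FF a has_real_derivative q t * g t) (at t)" using FF_deriv[OF ta tA] by (simp add: f_def)
    hence d: "((\<lambda>s. FF a s + c) has_real_derivative q t * g t) (at t)"
      using DERIV_add[OF _ DERIV_const[of c]] by fastforce
    show ?thesis by (rule deriv_open[OF S(1,2) dg d refl])
  qed
qed

lemma I4: "\<exists>gR. (deriv g \<longlongrightarrow> gR) (at_right \<rho>) \<and> (deriv g \<longlongrightarrow> gR + 1) (at_left \<rho>)"
proof -
  define a where "a = \<rho> - 1"
  obtain c0 c1 where r: "\<forall>t\<ge>a. g t = HH a t - max 0 (\<rho> - t) + c0 + c1 * t" using rep by blast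
  have FFc: "(FF a \<longlongrightarrow> FF a \<rho>) (at \<rho>)" using FF_isCont[of a \<rho>] unfolding a_def isCont_def by simp
  have dR: "deriv g s = FF a s + c1" if s: "s > \<rho>" for s
  proof -
    have "(g has_real_derivative FF a s + 0 + c1 * 1) (at s)"
    proof (rule deriv_open[of "{\<rho><..}" s g "\<lambda>s. HH a s + c0 + c1 * s"])
      show "((\<lambda>s. HH a s + c0 + c1 * s) has_real_derivative FF a s + 0 + c1 * 1) (at s)"
        using s by (intro DERIV_add HH_deriv DERIV_cmult DERIV_ident DERIV_const) (auto simp: a_def)
      show "\<And>x. x \<in> {\<rho><..} \<Longrightarrow> g x = HH a x + c0 + c1 * x" using r by (auto simp: a_def)
    qed (use s in auto)
    thus ?thesis using DERIV_imp_deriv by force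
  qed
  have dL: "deriv g s = FF a s + (1 + c1)" if s: "a < s" "s < \<rho>" for s
  proof -
    have "(g has_real_derivative FF a s - (0 - 1) + 0 + c1 * 1) (at s)"
    proof (rule deriv_open[of "{a<..<\<rho>}" s g "\<lambda>s. HH a s - (\<rho> - s) + c0 + c1 * s"])
      show "((\<lambda>s. HH a s - (\<rho> - s) + c0 + c1 * s) has_real_derivative FF a s - (0 - 1) + 0 + c1 * 1) (at s)"
        using s by (intro DERIV_add DERIV_diff HH_deriv DERIV_cmult DERIV_ident DERIV_const) auto
      show "\<And>x. x \<in> {a<..<\<rho>} \<Longrightarrow> g x = HH a x - (\<rho> - x) + c0 + c1 * x" using r by auto
    qed (use s in auto)
    thus ?thesis using DERIV_imp_deriv by force
  qed
  have lr: "at_right \<rho> \<le> at \<rho>" "at_left \<rho> \<le> at \<rho>" by (rule at_le, simp)+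
  have "((\<lambda>s. FF a s + c1) \<longlongrightarrow> FF a \<rho> + c1) (at_right \<rho>)"
    by (rule tendsto_add[OF tendsto_mono[OF lr(1) FFc] tendsto_const])
  hence R: "(deriv g \<longlongrightarrow> FF a \<rho> + c1) (at_right \<rho>)"
  proof (rule Lim_transform_eventually)
    show "\<forall>\<^sub>F x in at_right \<rho>. FF a x + c1 = deriv g x"
      using eventually_at_right_real[of \<rho> "\<rho>+1"] by (rule eventually_mono) (auto simp: dR)
  qed
  have "((\<lambda>s. FF a s + (1 + c1)) \<longlongrightarrow> FF a \<rho> + (1 + c1)) (at_left \<rho>)"
    by (rule tendsto_add[OF tendsto_mono[OF lr(2) FFc] tendsto_const])
  hence L: "(deriv g \<longlongrightarrow> FF a \<rho> + (1 + c1)) (at_left \<rho>)"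
  proof (rule Lim_transform_eventually)
    show "\<forall>\<^sub>F x in at_left \<rho>. FF a x + (1 + c1) = deriv g x"
      using eventually_at_left_real[of a \<rho>] by (rule eventually_mono) (auto simp: dL a_def)
  qed
  show ?thesis using R L by (intro exI[of _ "FF a \<rho> + c1"]) (simp add: algebra_simps)
qed

end

lemma meas_int: fixes l u A A' :: real assumes "l \<le> u"
  shows "measure lborel ({l..u} \<inter> {A..A'}) = max 0 (min u A' - max l A)"
proof (cases "max l A \<le> min u A'")
  case True thus ?thesis by (simp add: Int_atLeastAtMost)
next
  case False
  hence e: "{l..u} \<inter> {A..A'} = {}" by auto
  have "min u A' < max l A" using False by (simp only: not_le)
  hence "min u A' - max l A \<le> 0" by linarith
  hence "max 0 (min u A' - max l A) = 0" by (rule max_absorb1)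
  thus ?thesis using e by simp
qed

theorem mainTheorem2:
  shows "\<exists>C::real. \<forall>(k::int) (A::real) (A'::real) (\<rho>::real) (g::real \<Rightarrow> real).
    k \<noteq> 0 \<longrightarrow> A < A' \<longrightarrow> green_sol k A A' \<rho> g \<longrightarrow> continuous_on UNIV g \<longrightarrow>
    (\<forall>v::real. \<bar>g v\<bar> \<le> C / \<bar>real_of_int k\<bar> * exp (- \<bar>real_of_int k\<bar> * \<bar>v - \<rho>\<bar>)
        * exp (- (sqrt ((real_of_int k)^2 + 8) - \<bar>real_of_int k\<bar>)
               * measure lborel ({min v \<rho>..max v \<rho>} \<inter> {A..A'})))"
proof (intro exI[of _ 1] allI impI)
  fix k :: int and A A' \<rho> :: real and g :: "real \<Rightarrow> real" and v :: real
  assume k: "k \<noteq> 0" and AA: "A < A'" and gs: "green_sol k A A' \<rho> g" and gc: "continuous_on UNIV g"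
  obtain h where hL2: "L2 h" and wdg: "weak_deriv g h" and eqn: "\<forall>\<phi>. test_fun \<phi> \<longrightarrow>
        (\<integral>x. (real_of_int k)^2 * g x * \<phi> x + h x * deriv \<phi> x
              + 8 * indicator {A..A'} x * g x * \<phi> x \<partial>lborel) = \<phi> \<rho>"
    using gs unfolding green_sol_def by blast
  have L2g: "integrable lborel (\<lambda>x. (g x)^2)" using gs unfolding green_sol_def H1_def L2_def by blast
  interpret W: WF k A A' \<rho> g h using gc hL2 wdg eqn by unfold_locales auto
  define K where "K = \<bar>real_of_int k\<bar>"
  define \<mu> where "\<mu> = sqrt ((real_of_int k)^2 + 8)"
  have K: "K > 0" using k by (simp add: K_def)
  have K2: "K^2 = (real_of_int k)^2" by (simp add: K_def)
  have mu2: "\<mu>^2 = K^2 + 8" by (simp add: \<mu>_def K2)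
  have "0 < (real_of_int k)^2 + 8" using zero_le_power2[of "real_of_int k"] by linarith
  hence mu: "\<mu> > 0" by (simp add: \<mu>_def)
  interpret E1: Epar K \<mu> A A' using K mu2 mu AA by unfold_locales auto
  interpret E2: Epar K \<mu> "-A'" "-A" using K mu2 mu AA by unfold_locales auto
  have qK: "W.q t = K^2 + 8 * indicator {A..A'} t" for t by (simp add: W.q_def K2)
  obtain gR where gRr: "(deriv g \<longlongrightarrow> gR) (at_right \<rho>)" and gRl: "(deriv g \<longlongrightarrow> gR + 1) (at_left \<rho>)"
    using W.I4 by blast
  have RSr: "\<forall>y\<ge>\<rho>. g y = g \<rho> / EE K \<mu> A A' \<rho> * EE K \<mu> A A' y"
      and RSr2: "gR = g \<rho> / EE K \<mu> A A' \<rho> * EE1 K \<mu> A A' \<rho>"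
  proof -
    have a1: "continuous_on {\<rho>..} g" by (rule continuous_on_subset[OF gc]) auto
    have a2: "\<And>y. y > \<rho> \<Longrightarrow> (g has_real_derivative deriv g y) (at y)" by (rule W.I1) simp
    have a3: "continuous_on {\<rho><..} (deriv g)"
      by (rule continuous_at_imp_continuous_on) (auto intro!: W.I23(1))
    have a4: "\<And>y. y > \<rho> \<Longrightarrow> y \<noteq> A \<Longrightarrow> y \<noteq> A' \<Longrightarrow>
        (deriv g has_real_derivative (K^2 + 8 * indicator {A..A'} y) * g y) (at y)"
      using W.I23(2) qK by simp
    show "\<forall>y\<ge>\<rho>. g y = g \<rho> / EE K \<mu> A A' \<rho> * EE K \<mu> A A' y"
      by (rule E1.RS(1)[OF a1 a2 a3 a4 gRr L2g])
    show "gR = g \<rho> / EE K \<mu> A A' \<rho> * EE1 K \<mu> A A' \<rho>"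
      by (rule E1.RS(2)[OF a1 a2 a3 a4 gRr L2g])
  qed
  define gm where "gm t = g (- t)" for t
  define g1m where "g1m t = - deriv g (- t)" for t
  have RSl: "\<forall>y\<ge>-\<rho>. gm y = gm (-\<rho>) / EE K \<mu> (-A') (-A) (-\<rho>) * EE K \<mu> (-A') (-A) y"
      and RSl2: "-(gR + 1) = gm (-\<rho>) / EE K \<mu> (-A') (-A) (-\<rho>) * EE1 K \<mu> (-A') (-A) (-\<rho>)"
  proof -
    have a1: "continuous_on {-\<rho>..} gm" unfolding gm_def
      by (rule continuous_on_compose2[OF gc]) (auto intro!: continuous_intros)
    have a2: "(gm has_real_derivative g1m y) (at y)" if y: "y > -\<rho>" for y
    proof -
      have "(g has_real_derivative deriv g (- y)) (at (- y))" using y by (intro W.I1) auto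
      thus ?thesis unfolding gm_def g1m_def using DERIV_mirror by blast
    qed
    have a3: "continuous_on {-\<rho><..} g1m"
    proof (rule continuous_at_imp_continuous_on, rule ballI)
      fix y assume "y \<in> {-\<rho><..}"
      hence "isCont (deriv g) (- y)" by (intro W.I23(1)) auto
      hence "isCont (\<lambda>t. deriv g (- t)) y"
        using isCont_o2[OF continuous_minus[OF continuous_ident], of y "deriv g"] by simp
      thus "isCont g1m y" unfolding g1m_def by (intro continuous_intros)
    qed
    have a4: "(g1m has_real_derivative (K^2 + 8 * indicator {-A'..-A} y) * gm y) (at y)"
      if y: "y > -\<rho>" "y \<noteq> -A'" "y \<noteq> -A" for y
    proof -
      have "(deriv g has_real_derivative W.q (-y) * g (-y)) (at (- y))"
        using y by (intro W.I23(2)) auto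
      hence "((\<lambda>t. deriv g (- t)) has_real_derivative - (W.q (-y) * g (-y))) (at y)"
        using DERIV_mirror by blast
      hence "(g1m has_real_derivative - (- (W.q (-y) * g (-y)))) (at y)"
        unfolding g1m_def by (rule DERIV_minus)
      moreover have "indicator {-A'..-A} y = (indicator {A..A'} (-y) :: real)"
        by (auto simp: indicator_def)
      ultimately show ?thesis by (simp add: qK gm_def)
    qed
    have a5: "(g1m \<longlongrightarrow> -(gR + 1)) (at_right (-\<rho>))"
    proof -
      have "((\<lambda>t. deriv g (- t)) \<longlongrightarrow> gR + 1) (at_right (-\<rho>))"
        using gRl unfolding filterlim_at_left_to_right .
      thus ?thesis unfolding g1m_def by (rule tendsto_minus)
    qed
    have a6: "integrable lborel (\<lambda>x. (gm x)^2)"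
      using lborel_integrable_real_affine_iff[of "-1" "\<lambda>x. (g x)^2" 0] L2g by (simp add: gm_def)
    show "\<forall>y\<ge>-\<rho>. gm y = gm (-\<rho>) / EE K \<mu> (-A') (-A) (-\<rho>) * EE K \<mu> (-A') (-A) y"
      by (rule E2.RS(1)[OF a1 a2 a3 a4 a5 a6])
    show "-(gR + 1) = gm (-\<rho>) / EE K \<mu> (-A') (-A) (-\<rho>) * EE1 K \<mu> (-A') (-A) (-\<rho>)"
      by (rule E2.RS(2)[OF a1 a2 a3 a4 a5 a6])
  qed
  define M where "M = g \<rho>"
  define E where "E = EE K \<mu> A A'"
  define Em where "Em = EE K \<mu> (-A') (-A)"
  have Ep: "E y > 0" "Em y > 0" for y unfolding E_def Em_def by (rule E1.EE_pos, rule E2.EE_pos)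
  define r1 where "r1 = EE1 K \<mu> A A' \<rho> / E \<rho>"
  define r2 where "r2 = EE1 K \<mu> (-A') (-A) (-\<rho>) / Em (-\<rho>)"
  have r1: "r1 \<le> -K" using E1.EE1_le[of \<rho>] Ep(1)[of \<rho>] unfolding r1_def E_def by (simp add: field_simps)
  have r2: "r2 \<le> -K" using E2.EE1_le[of "-\<rho>"] Ep(2)[of "-\<rho>"] unfolding r2_def Em_def by (simp add: field_simps)
  have e1: "gR = M * r1" using RSr2 unfolding r1_def M_def E_def by simp
  have e2: "-(gR + 1) = M * r2" using RSl2 unfolding r2_def M_def Em_def gm_def by simp
  have e3: "M * (r1 + r2) = M * r1 + M * r2" by (simp add: distrib_left)
  have "M * (r1 + r2) = -1" using e1 e2 e3 by linarith
  hence "\<bar>M * (r1 + r2)\<bar> = 1" by simp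
  hence one: "\<bar>M\<bar> * \<bar>r1 + r2\<bar> = 1" by (simp only: abs_mult)
  have "\<bar>r1 + r2\<bar> \<ge> 2 * K" using r1 r2 K by linarith
  hence "\<bar>M\<bar> * (2 * K) \<le> \<bar>M\<bar> * \<bar>r1 + r2\<bar>" by (rule mult_left_mono) simp
  hence "\<bar>M\<bar> * (2 * K) \<le> 1" using one by simp
  hence Mb: "2 * \<bar>M\<bar> \<le> 1 / K" using K by (simp add: field_simps)
  show "\<bar>g v\<bar> \<le> 1 / \<bar>real_of_int k\<bar> * exp (- \<bar>real_of_int k\<bar> * \<bar>v - \<rho>\<bar>)
        * exp (- (sqrt ((real_of_int k)^2 + 8) - \<bar>real_of_int k\<bar>)
               * measure lborel ({min v \<rho>..max v \<rho>} \<inter> {A..A'}))"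
  proof (cases "\<rho> \<le> v")
    case True
    define X where "X = exp (-K*(v-\<rho>)) * exp (-(\<mu>-K) * max 0 (min v A' - max \<rho> A))"
    have X: "X > 0" by (simp add: X_def)
    have gv: "g v = M / E \<rho> * E v" unfolding M_def E_def by (rule RSr[rule_format, OF True])
    have ratio: "E v \<le> 2 * E \<rho> * X" using E1.EE_ratio[OF True] unfolding E_def X_def by (simp add: mult.assoc)
    have r: "E v / E \<rho> \<le> 2 * X" using ratio Ep(1)[of \<rho>] by (simp add: pos_divide_le_eq mult_ac)
    have "\<bar>g v\<bar> = \<bar>M\<bar> * (E v / E \<rho>)" unfolding gv using Ep(1)[of \<rho>] Ep(1)[of v] by (simp add: abs_mult)
    also have "\<dots> \<le> \<bar>M\<bar> * (2 * X)" using r by (rule mult_left_mono) simp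
    also have "\<dots> = (2 * \<bar>M\<bar>) * X" by simp
    also have "\<dots> \<le> 1 / K * X" using Mb by (rule mult_right_mono) (use X in simp)
    finally have fin: "\<bar>g v\<bar> \<le> 1 / K * X" .
    have m: "measure lborel ({min v \<rho>..max v \<rho>} \<inter> {A..A'}) = max 0 (min v A' - max \<rho> A)"
      using meas_int[OF True, of A A'] True by (simp add: min_absorb2 max_absorb1)
    have ab: "\<bar>v - \<rho>\<bar> = v - \<rho>" using True by simp
    show ?thesis unfolding m ab K_def[symmetric] \<mu>_def[symmetric] using fin by (simp add: X_def mult.assoc)
  next
    case False
    hence vr: "-\<rho> \<le> -v" by simp
    define X where "X = exp (-K*(-v - -\<rho>)) * exp (-(\<mu>-K) * max 0 (min (-v) (-A) - max (-\<rho>) (-A')))"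
    have X: "X > 0" by (simp add: X_def)
    have gv0: "gm (-v) = gm (-\<rho>) / Em (-\<rho>) * Em (-v)" unfolding Em_def by (rule RSl[rule_format, OF vr])
    have gv: "g v = M / Em (-\<rho>) * Em (-v)" using gv0 unfolding M_def gm_def by simp
    have ratio: "Em (-v) \<le> 2 * Em (-\<rho>) * X" using E2.EE_ratio[OF vr] unfolding Em_def X_def by (simp add: mult.assoc)
    have r: "Em (-v) / Em (-\<rho>) \<le> 2 * X" using ratio Ep(2)[of "-\<rho>"] by (simp add: pos_divide_le_eq mult_ac)
    have "\<bar>g v\<bar> = \<bar>M\<bar> * (Em (-v) / Em (-\<rho>))" unfolding gv using Ep(2)[of "-\<rho>"] Ep(2)[of "-v"] by (simp add: abs_mult)
    also have "\<dots> \<le> \<bar>M\<bar> * (2 * X)" using r by (rule mult_left_mono) simp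
    also have "\<dots> = (2 * \<bar>M\<bar>) * X" by simp
    also have "\<dots> \<le> 1 / K * X" using Mb by (rule mult_right_mono) (use X in simp)
    finally have fin: "\<bar>g v\<bar> \<le> 1 / K * X" .
    have vle: "v \<le> \<rho>" using False by simp
    have mm: "min (-v) (-A) - max (-\<rho>) (-A') = min \<rho> A' - max v A" by (simp add: min_def max_def)
    have m: "measure lborel ({min v \<rho>..max v \<rho>} \<inter> {A..A'}) = max 0 (min (-v) (-A) - max (-\<rho>) (-A'))"
      unfolding mm using meas_int[OF vle, of A A'] vle by (simp add: min_absorb1 max_absorb2)
    have ab: "\<bar>v - \<rho>\<bar> = -v - -\<rho>" using False by simp
    show ?thesis unfolding m ab K_def[symmetric] \<mu>_def[symmetric] using fin by (simp add: X_def mult.assoc)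
  qed
qed


end
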